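(* Let $(X,\Sigma,\mu)$ be a semi-finite measure space and $M:=(L^1)^*$, with $L^\infty$ regarded as a subspace of $M$ via $g\mapsto(f\mapsto\int fg\,d\mu)$. Then $\tau(L^\infty,L^1)=\tau(M,L^1)|_{L^\infty}$.
   Context: $L^\infty$, $L^1$ are the real spaces of essentially bounded, resp. integrable, functions. $\tau(L^\infty,L^1)$ is the Mackey topology of the duality $\langle L^\infty,L^1\rangle$ given by $\langle f,g\rangle=\int fg\,d\mu$ (uniform convergence on absolutely convex $\sigma(L^1,L^\infty)$-compact subsets of $L^1$), and $\tau(M,L^1)$ is the Mackey topology of the duality $\langle M,L^1\rangle$; $|_{L^\infty}$ denotes the subspace topology. *)

theory Defs
  imports "HOL-Analysis.Analysis"
begin

definition semifinite_measure :: "'a measure \<Rightarrow> bool" where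
  "semifinite_measure \<mu> \<longleftrightarrow>
     (\<forall>A\<in>sets \<mu>. emeasure \<mu> A = \<infinity> \<longrightarrow>
        (\<exists>B\<in>sets \<mu>. B \<subseteq> A \<and> 0 < emeasure \<mu> B \<and> emeasure \<mu> B < \<infinity>))"

text \<open>Real L^1 and L^infinity, represented by their (real-valued) representatives.\<close>
definition L1 :: "'a measure \<Rightarrow> ('a \<Rightarrow> real) set" where
  "L1 \<mu> = {f. integrable \<mu> f}"

definition Linf :: "'a measure \<Rightarrow> ('a \<Rightarrow> real) set" where
  "Linf \<mu> = {g. g \<in> borel_measurable \<mu> \<and> (\<exists>C. AE x in \<mu>. \<bar>g x\<bar> \<le> C)}"

definition pairing :: "'a measure \<Rightarrow> ('a \<Rightarrow> real) \<Rightarrow> ('a \<Rightarrow> real) \<Rightarrow> real" where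
  "pairing \<mu> f g = (LINT x|\<mu>. f x * g x)"

definition L1_dual :: "'a measure \<Rightarrow> (('a \<Rightarrow> real) \<Rightarrow> real) set" where
  "L1_dual \<mu> = {\<phi>.
     (\<forall>f\<in>L1 \<mu>. \<forall>h\<in>L1 \<mu>. \<forall>a b::real.
        \<phi> (\<lambda>x. a * f x + b * h x) = a * \<phi> f + b * \<phi> h) \<and>
     (\<exists>C. \<forall>f\<in>L1 \<mu>. \<bar>\<phi> f\<bar> \<le> C * (LINT x|\<mu>. \<bar>f x\<bar>))}"

definition abs_convex :: "('a \<Rightarrow> real) set \<Rightarrow> bool" where
  "abs_convex K \<longleftrightarrow>
     (\<forall>f\<in>K. \<forall>h\<in>K. \<forall>a b::real. \<bar>a\<bar> + \<bar>b\<bar> \<le> 1 \<longrightarrow> (\<lambda>x. a * f x + b * h x) \<in> K)"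

definition unif_conv_topology ::
    "'v set \<Rightarrow> 'w set set \<Rightarrow> ('w \<Rightarrow> 'v \<Rightarrow> real) \<Rightarrow> 'v topology" where
  "unif_conv_topology S \<K> p = topology (\<lambda>U. U \<subseteq> S \<and>
     (\<forall>x\<in>U. \<exists>F \<epsilon>. finite F \<and> F \<subseteq> \<K> \<and> \<epsilon> > 0 \<and>
        {y\<in>S. \<forall>K\<in>F. \<forall>w\<in>K. \<bar>p w y - p w x\<bar> \<le> \<epsilon>} \<subseteq> U))"

definition weak_topology :: "'w set \<Rightarrow> 'v set \<Rightarrow> ('w \<Rightarrow> 'v \<Rightarrow> real) \<Rightarrow> 'w topology" where
  "weak_topology W V p = unif_conv_topology W {{v} | v. v \<in> V} (\<lambda>v w. p w v)"

definition mackey_topology ::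
    "'v set \<Rightarrow> ('a \<Rightarrow> real) set \<Rightarrow> (('a \<Rightarrow> real) \<Rightarrow> 'v \<Rightarrow> real) \<Rightarrow> 'v topology" where
  "mackey_topology V W p = unif_conv_topology V
     {K. K \<subseteq> W \<and> abs_convex K \<and> compactin (weak_topology W V p) K} p"

end

theory Submission
  imports Defs
begin

definition nbh :: "'v set \<Rightarrow> ('w \<Rightarrow> 'v \<Rightarrow> real) \<Rightarrow> 'v \<Rightarrow> 'w set set \<Rightarrow> real \<Rightarrow> 'v set" where
  "nbh S p x F e = {y\<in>S. \<forall>K\<in>F. \<forall>w\<in>K. \<bar>p w y - p w x\<bar> \<le> e}"

lemma nbh_Un: "nbh S p x (F1 \<union> F2) (min e1 e2) \<subseteq> nbh S p x F1 e1 \<inter> nbh S p x F2 e2"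
  unfolding nbh_def by auto

lemma istopology_uc_nbh:
  fixes S :: "'v set" and p :: "'w \<Rightarrow> 'v \<Rightarrow> real"
  shows "istopology (\<lambda>U. U \<subseteq> S \<and> (\<forall>x\<in>U. \<exists>F \<epsilon>. finite F \<and> F \<subseteq> \<K> \<and> \<epsilon> > 0 \<and> nbh S p x F \<epsilon> \<subseteq> U))"
  unfolding istopology_def
proof (rule conjI; intro allI impI)
  fix U V
  assume U: "U \<subseteq> S \<and> (\<forall>x\<in>U. \<exists>F \<epsilon>. finite F \<and> F \<subseteq> \<K> \<and> \<epsilon> > 0 \<and> nbh S p x F \<epsilon> \<subseteq> U)"
    and V: "V \<subseteq> S \<and> (\<forall>x\<in>V. \<exists>F \<epsilon>. finite F \<and> F \<subseteq> \<K> \<and> \<epsilon> > 0 \<and> nbh S p x F \<epsilon> \<subseteq> V)"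
  show "U \<inter> V \<subseteq> S \<and> (\<forall>x\<in>U \<inter> V. \<exists>F \<epsilon>. finite F \<and> F \<subseteq> \<K> \<and> \<epsilon> > 0 \<and> nbh S p x F \<epsilon> \<subseteq> U \<inter> V)"
  proof (intro conjI ballI)
    show "U \<inter> V \<subseteq> S" using U by blast
    fix x assume x: "x \<in> U \<inter> V"
    then have xU: "x \<in> U" and xV: "x \<in> V" by auto
    from bspec[OF conjunct2[OF U] xU]
    obtain F1 e1 where 1: "finite F1" "F1 \<subseteq> \<K>" "e1 > 0" "nbh S p x F1 e1 \<subseteq> U"
      by (elim exE conjE)
    from bspec[OF conjunct2[OF V] xV]
    obtain F2 e2 where 2: "finite F2" "F2 \<subseteq> \<K>" "e2 > 0" "nbh S p x F2 e2 \<subseteq> V"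
      by (elim exE conjE)
    show "\<exists>F \<epsilon>. finite F \<and> F \<subseteq> \<K> \<and> \<epsilon> > 0 \<and> nbh S p x F \<epsilon> \<subseteq> U \<inter> V"
    proof (intro exI conjI)
      show "finite (F1 \<union> F2)" "F1 \<union> F2 \<subseteq> \<K>" using 1 2 by auto
      show "min e1 e2 > 0" using 1(3) 2(3) by (simp add: min_def)
      show "nbh S p x (F1 \<union> F2) (min e1 e2) \<subseteq> U \<inter> V"
        using nbh_Un[of S p x F1 F2 e1 e2] 1(4) 2(4) by blast
    qed
  qed
next
  fix \<U> :: "'v set set"
  assume A: "\<forall>U\<in>\<U>. U \<subseteq> S \<and> (\<forall>x\<in>U. \<exists>F \<epsilon>. finite F \<and> F \<subseteq> \<K> \<and> \<epsilon> > 0 \<and> nbh S p x F \<epsilon> \<subseteq> U)"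
  show "\<Union>\<U> \<subseteq> S \<and> (\<forall>x\<in>\<Union>\<U>. \<exists>F \<epsilon>. finite F \<and> F \<subseteq> \<K> \<and> \<epsilon> > 0 \<and> nbh S p x F \<epsilon> \<subseteq> \<Union>\<U>)"
  proof (intro conjI ballI)
    show "\<Union>\<U> \<subseteq> S" using A by blast
    fix x assume "x \<in> \<Union>\<U>"
    then obtain U where U: "U \<in> \<U>" "x \<in> U" by blast
    from bspec[OF conjunct2[OF bspec[OF A U(1)]] U(2)]
    obtain F e where "finite F" "F \<subseteq> \<K>" "e > 0" "nbh S p x F e \<subseteq> U"
      by (elim exE conjE)
    then show "\<exists>F \<epsilon>. finite F \<and> F \<subseteq> \<K> \<and> \<epsilon> > 0 \<and> nbh S p x F \<epsilon> \<subseteq> \<Union>\<U>"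
      using U by blast
  qed
qed

lemma istopology_uc:
  fixes p :: "'w \<Rightarrow> 'v \<Rightarrow> real"
  shows "istopology (\<lambda>U. U \<subseteq> S \<and>
     (\<forall>x\<in>U. \<exists>F \<epsilon>. finite F \<and> F \<subseteq> \<K> \<and> \<epsilon> > 0 \<and>
        {y\<in>S. \<forall>K\<in>F. \<forall>w\<in>K. \<bar>p w y - p w x\<bar> \<le> \<epsilon>} \<subseteq> U))"
  using istopology_uc_nbh[of S \<K> p] unfolding nbh_def .

lemma openin_uc:
  "openin (unif_conv_topology S \<K> p) U \<longleftrightarrow> U \<subseteq> S \<and>
     (\<forall>x\<in>U. \<exists>F \<epsilon>. finite F \<and> F \<subseteq> \<K> \<and> \<epsilon> > 0 \<and> nbh S p x F \<epsilon> \<subseteq> U)"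
  unfolding unif_conv_topology_def
  by (simp only: topology_inverse'[OF istopology_uc] nbh_def)

lemma openin_ucD:
  assumes "openin (unif_conv_topology S \<K> p) U" "x \<in> U"
  obtains F e where "finite F" "F \<subseteq> \<K>" "e > 0" "nbh S p x F e \<subseteq> U"
proof -
  from bspec[OF conjunct2[OF assms(1)[unfolded openin_uc]] assms(2)]
  show ?thesis using that by (elim exE conjE)
qed

lemma nbh_self: "x \<in> S \<Longrightarrow> e \<ge> 0 \<Longrightarrow> x \<in> nbh S p x F e"
  unfolding nbh_def by auto

lemma nbh_trans: "y \<in> nbh S p z F a \<Longrightarrow> z \<in> nbh S p u F b \<Longrightarrow> y \<in> nbh S p u F (a + b)"
proof -
  assume y: "y \<in> nbh S p z F a" and z: "z \<in> nbh S p u F b"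
  have "\<bar>p w y - p w u\<bar> \<le> a + b" if "K \<in> F" "w \<in> K" for K w
  proof -
    have "\<bar>p w y - p w z\<bar> \<le> a" "\<bar>p w z - p w u\<bar> \<le> b"
      using y z that unfolding nbh_def by auto
    then show ?thesis by linarith
  qed
  then show ?thesis using y unfolding nbh_def by auto
qed

lemma nbh_mono: "y \<in> nbh S p x F a \<Longrightarrow> a \<le> b \<Longrightarrow> y \<in> nbh S p x F b"
  unfolding nbh_def by force

lemma topspace_uc: "topspace (unif_conv_topology S \<K> p) = S"
proof -
  have "openin (unif_conv_topology S \<K> p) S"
    unfolding openin_uc by (intro conjI ballI exI[of _ "{}"] exI[of _ "1::real"]) (auto simp: nbh_def)
  then have 1: "S \<subseteq> topspace (unif_conv_topology S \<K> p)" by (rule openin_subset)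
  have 2: "topspace (unif_conv_topology S \<K> p) \<subseteq> S"
    using openin_topspace[of "unif_conv_topology S \<K> p"] unfolding openin_uc by (elim conjE)
  show ?thesis using 1 2 by (rule antisym[rotated])
qed

lemma pullback_uc:
  assumes iota: "\<And>x. x \<in> S \<Longrightarrow> \<iota> x \<in> T"
    and q: "\<And>w x. x \<in> S \<Longrightarrow> q w (\<iota> x) = p w x"
  shows "pullback_topology S \<iota> (unif_conv_topology T \<K> q) = unif_conv_topology S \<K> p"
proof -
  have push: "\<iota> y \<in> nbh T q (\<iota> x) F e" if "x \<in> S" "y \<in> nbh S p x F e" for x y F e
    using that iota q unfolding nbh_def by auto
  have pull: "y \<in> nbh S p x F e" if "x \<in> S" "y \<in> S" "\<iota> y \<in> nbh T q (\<iota> x) F e" for x y F e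
    using that iota q unfolding nbh_def by auto
  show ?thesis
  proof (subst topology_eq, intro allI iffI)
    fix U assume "openin (pullback_topology S \<iota> (unif_conv_topology T \<K> q)) U"
    then obtain U' where U': "openin (unif_conv_topology T \<K> q) U'" "U = \<iota> -` U' \<inter> S"
      by (auto simp: openin_pullback_topology)
    show "openin (unif_conv_topology S \<K> p) U"
      unfolding openin_uc
    proof (intro conjI ballI)
      show "U \<subseteq> S" using U' by auto
      fix x assume x: "x \<in> U"
      then have ix: "\<iota> x \<in> U'" and xS: "x \<in> S" using U' by auto
      obtain F e where Fe: "finite F" "F \<subseteq> \<K>" "e > 0" "nbh T q (\<iota> x) F e \<subseteq> U'"
        by (rule openin_ucD[OF U'(1) ix])
      have "nbh S p x F e \<subseteq> U"
      proof
        fix y assume y: "y \<in> nbh S p x F e"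
        then have "y \<in> S" unfolding nbh_def by auto
        moreover have "\<iota> y \<in> U'" using push[OF xS y] Fe(4) by (rule subsetD[rotated])
        ultimately show "y \<in> U" using U'(2) by simp
      qed
      then show "\<exists>F \<epsilon>. finite F \<and> F \<subseteq> \<K> \<and> \<epsilon> > 0 \<and> nbh S p x F \<epsilon> \<subseteq> U"
        using Fe(1-3) by (intro exI[of _ F] exI[of _ e] conjI)
    qed
  next
    fix U assume U: "openin (unif_conv_topology S \<K> p) U"
    have US: "U \<subseteq> S" using U unfolding openin_uc by (elim conjE)
    define U' where "U' = {z\<in>T. \<exists>x\<in>U. \<exists>F e d. finite F \<and> F \<subseteq> \<K> \<and> e > 0 \<and>
         nbh S p x F e \<subseteq> U \<and> d > 0 \<and> z \<in> nbh T q (\<iota> x) F (e - d)}"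
    have "openin (unif_conv_topology T \<K> q) U'"
      unfolding openin_uc
    proof (intro conjI ballI)
      show "U' \<subseteq> T" unfolding U'_def by (rule Collect_subset)
      fix z assume "z \<in> U'"
      then obtain x F e d where z: "z \<in> T" "x \<in> U" "finite F" "F \<subseteq> \<K>" "e > 0"
         "nbh S p x F e \<subseteq> U" "d > 0" "z \<in> nbh T q (\<iota> x) F (e - d)"
        unfolding U'_def by (elim CollectE conjE bexE exE)
      have "nbh T q z F (d/2) \<subseteq> U'"
      proof
        fix y assume y: "y \<in> nbh T q z F (d/2)"
        have "y \<in> nbh T q (\<iota> x) F (d/2 + (e - d))" by (rule nbh_trans[OF y z(8)])
        moreover have "d/2 + (e - d) = e - d/2" by simp
        ultimately have y2: "y \<in> nbh T q (\<iota> x) F (e - d/2)" by simp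
        have yT: "y \<in> T" using y unfolding nbh_def by simp
        show "y \<in> U'" unfolding U'_def
          using yT z(2-7) y2 \<open>d > 0\<close>
          by (intro CollectI conjI bexI[of _ x] exI[of _ F] exI[of _ e] exI[of _ "d/2"]) simp_all
      qed
      then show "\<exists>F \<epsilon>. finite F \<and> F \<subseteq> \<K> \<and> \<epsilon> > 0 \<and> nbh T q z F \<epsilon> \<subseteq> U'"
        using z(3,4,7) by (intro exI[of _ F] exI[of _ "d/2"] conjI) simp_all
    qed
    moreover have "U = \<iota> -` U' \<inter> S"
    proof (intro equalityI subsetI)
      fix x assume x: "x \<in> U"
      then have xS: "x \<in> S" using US by blast
      obtain F e where Fe: "finite F" "F \<subseteq> \<K>" "e > 0" "nbh S p x F e \<subseteq> U"
        by (rule openin_ucD[OF U x])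
      have "\<iota> x \<in> nbh T q (\<iota> x) F (e - e/2)"
        using iota[OF xS] Fe(3) by (intro nbh_self) simp_all
      then have "\<iota> x \<in> U'" unfolding U'_def using Fe x iota[OF xS]
        by (intro CollectI conjI bexI[of _ x] exI[of _ F] exI[of _ e] exI[of _ "e/2"]) simp_all
      then show "x \<in> \<iota> -` U' \<inter> S" using xS by simp
    next
      fix y assume y: "y \<in> \<iota> -` U' \<inter> S"
      then have yS: "y \<in> S" and "\<iota> y \<in> U'" by auto
      then obtain x F e d where z: "x \<in> U" "finite F" "F \<subseteq> \<K>" "e > 0"
         "nbh S p x F e \<subseteq> U" "d > 0" "\<iota> y \<in> nbh T q (\<iota> x) F (e - d)"
        unfolding U'_def by (elim CollectE conjE bexE exE)
      have xS: "x \<in> S" using US z(1) by blast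
      have "y \<in> nbh S p x F (e - d)" by (rule pull[OF xS yS z(7)])
      then have "y \<in> nbh S p x F e" by (rule nbh_mono) (use z(6) in simp)
      then show "y \<in> U" using z(5) by blast
    qed
    ultimately show "openin (pullback_topology S \<iota> (unif_conv_topology T \<K> q)) U"
      by (auto simp: openin_pullback_topology)
  qed
qed

lemma nbh_weak:
  "nbh W (\<lambda>v w. p w v) x ((\<lambda>g. {g}) ` G) e = {y\<in>W. \<forall>g\<in>G. \<bar>p y g - p x g\<bar> \<le> e}"
  unfolding nbh_def by auto

lemma openin_weak_basic:
  assumes "finite G" "G \<subseteq> V" "\<delta> > 0"
  shows "openin (weak_topology W V p) {y\<in>W. \<forall>g\<in>G. \<bar>p y g - p x g\<bar> < \<delta>}"
  unfolding weak_topology_def openin_uc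
proof (intro conjI ballI)
  show "{y\<in>W. \<forall>g\<in>G. \<bar>p y g - p x g\<bar> < \<delta>} \<subseteq> W" by (rule Collect_subset)
  fix y assume y: "y \<in> {y\<in>W. \<forall>g\<in>G. \<bar>p y g - p x g\<bar> < \<delta>}"
  define m where "m = Min (insert \<delta> ((\<lambda>g. \<delta> - \<bar>p y g - p x g\<bar>) ` G))"
  have m: "m > 0" unfolding m_def using assms y by (subst Min_gr_iff) auto
  have mle: "m \<le> \<delta> - \<bar>p y g - p x g\<bar>" if "g \<in> G" for g
    unfolding m_def using assms that by (intro Min_le) auto
  have sub: "nbh W (\<lambda>v w. p w v) y ((\<lambda>g. {g}) ` G) (m/2) \<subseteq> {y\<in>W. \<forall>g\<in>G. \<bar>p y g - p x g\<bar> < \<delta>}"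
    unfolding nbh_weak
  proof (intro subsetI CollectI conjI ballI)
    fix z assume z: "z \<in> {y'\<in>W. \<forall>g\<in>G. \<bar>p y' g - p y g\<bar> \<le> m/2}"
    then show "z \<in> W" by simp
    fix g assume g: "g \<in> G"
    have "\<bar>p z g - p y g\<bar> \<le> m/2" using z g by simp
    moreover have "m \<le> \<delta> - \<bar>p y g - p x g\<bar>" using mle g .
    ultimately show "\<bar>p z g - p x g\<bar> < \<delta>" using m by linarith
  qed
  show "\<exists>F \<epsilon>. finite F \<and> F \<subseteq> {{v} |v. v \<in> V} \<and> \<epsilon> > 0 \<and>
        nbh W (\<lambda>v w. p w v) y F \<epsilon> \<subseteq> {y\<in>W. \<forall>g\<in>G. \<bar>p y g - p x g\<bar> < \<delta>}"
  proof (intro exI[of _ "(\<lambda>g. {g}) ` G"] exI[of _ "m/2"] conjI sub)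
    show "finite ((\<lambda>g. {g}) ` G)" using assms by simp
    show "(\<lambda>g. {g}) ` G \<subseteq> {{v} |v. v \<in> V}" using assms by auto
    show "m/2 > 0" using m by simp
  qed
qed

lemma openin_weakD:
  assumes "openin (weak_topology W V p) U" "x \<in> U"
  obtains G e where "finite G" "G \<subseteq> V" "e > 0" "{y\<in>W. \<forall>g\<in>G. \<bar>p y g - p x g\<bar> \<le> e} \<subseteq> U"
proof -
  obtain F e where Fe: "finite F" "F \<subseteq> {{v} |v. v \<in> V}" "e > 0"
      "nbh W (\<lambda>v w. p w v) x F e \<subseteq> U"
    by (rule openin_ucD[OF assms(1)[unfolded weak_topology_def] assms(2)])
  have fin: "finite (\<Union>F)"
  proof (rule finite_Union[OF Fe(1)])
    fix K assume "K \<in> F"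
    then obtain v where "K = {v}" using Fe(2) by blast
    then show "finite K" by simp
  qed
  have sub: "\<Union>F \<subseteq> V"
  proof
    fix g assume "g \<in> \<Union>F"
    then obtain K where K: "K \<in> F" "g \<in> K" by (rule UnionE)
    then obtain v where "K = {v}" "v \<in> V" using Fe(2) by blast
    then show "g \<in> V" using K by simp
  qed
  have eq: "{y\<in>W. \<forall>g\<in>\<Union>F. \<bar>p y g - p x g\<bar> \<le> e} = nbh W (\<lambda>v w. p w v) x F e"
    unfolding nbh_def by auto
  show ?thesis using that[OF fin sub Fe(3)] eq Fe(4) by simp
qed

lemma topspace_weak: "topspace (weak_topology W V p) = W"
  unfolding weak_topology_def topspace_uc ..

lemma compactin_transfer:
  assumes K: "compactin X K" and top: "topspace Y = topspace X"
    and loc: "\<And>U x. openin Y U \<Longrightarrow> x \<in> K \<Longrightarrow> x \<in> U \<Longrightarrow> \<exists>V. openin X V \<and> x \<in> V \<and> K \<inter> V \<subseteq> U"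
  shows "compactin Y K"
  unfolding compactin_def
proof (intro conjI allI impI)
  show "K \<subseteq> topspace Y" using K top by (simp add: compactin_subset_topspace)
  fix \<U> assume U: "(\<forall>U\<in>\<U>. openin Y U) \<and> K \<subseteq> \<Union>\<U>"
  have "\<exists>U V. U \<in> \<U> \<and> openin X V \<and> x \<in> V \<and> K \<inter> V \<subseteq> U" if x: "x \<in> K" for x
  proof -
    obtain U where U1: "U \<in> \<U>" "x \<in> U" using U x by blast
    have "openin Y U" using U U1 by blast
    then obtain V where "openin X V" "x \<in> V" "K \<inter> V \<subseteq> U" using loc x U1(2) by metis
    then show ?thesis using U1 by (intro exI[of _ U] exI[of _ V] conjI)
  qed
  then obtain Uf Vf where UV: "\<And>x. x \<in> K \<Longrightarrow> Uf x \<in> \<U> \<and> openin X (Vf x) \<and> x \<in> Vf x \<and> K \<inter> Vf x \<subseteq> Uf x"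
    by metis
  have op: "\<forall>V\<in>Vf ` K. openin X V" using UV by blast
  have cov: "K \<subseteq> \<Union>(Vf ` K)" using UV by blast
  have "\<exists>\<F>. finite \<F> \<and> \<F> \<subseteq> Vf ` K \<and> K \<subseteq> \<Union>\<F>"
    using K unfolding compactin_def
    by (elim conjE allE[of _ "Vf ` K"]) (use op cov in blast)
  then obtain \<F> where F: "finite \<F>" "\<F> \<subseteq> Vf ` K" "K \<subseteq> \<Union>\<F>" by blast
  then obtain C where C: "C \<subseteq> K" "finite C" "\<F> = Vf ` C"
    by (meson finite_subset_image)
  show "\<exists>\<F>. finite \<F> \<and> \<F> \<subseteq> \<U> \<and> K \<subseteq> \<Union>\<F>"
  proof (intro exI[of _ "Uf ` C"] conjI)
    show "finite (Uf ` C)" using C by auto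
    show "Uf ` C \<subseteq> \<U>" using C UV by auto
    show "K \<subseteq> \<Union>(Uf ` C)"
    proof
      fix x assume "x \<in> K"
      then obtain c where c: "c \<in> C" "x \<in> Vf c" using F C by blast
      then have "x \<in> Uf c" using UV[of c] C \<open>x \<in> K\<close> by blast
      then show "x \<in> \<Union>(Uf ` C)" using c by blast
    qed
  qed
qed

lemma weak_cluster:
  assumes K: "compactin (weak_topology W V p) K"
    and AK: "\<And>i. i \<in> I \<Longrightarrow> A i \<subseteq> K"
    and fip: "\<And>J. finite J \<Longrightarrow> J \<subseteq> I \<Longrightarrow> \<exists>f\<in>K. \<forall>j\<in>J. f \<in> A j"
  shows "\<exists>c\<in>K. \<forall>i\<in>I. \<forall>G \<delta>. finite G \<and> G \<subseteq> V \<and> \<delta> > 0 \<longrightarrow>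
           (\<exists>f\<in>A i. \<forall>g\<in>G. \<bar>p f g - p c g\<bar> < \<delta>)"
proof (rule ccontr)
  assume neg: "\<not> ?thesis"
  define Q where "Q c t \<longleftrightarrow> fst t \<in> I \<and> finite (fst (snd t)) \<and> fst (snd t) \<subseteq> V \<and> snd (snd t) > (0::real) \<and>
           (\<forall>f\<in>A (fst t). \<not> (\<forall>g\<in>fst (snd t). \<bar>p f g - p c g\<bar> < snd (snd t)))" for c t
  have "\<exists>t. Q c t" if cK: "c \<in> K" for c
  proof -
    have "\<not> (\<forall>i\<in>I. \<forall>G \<delta>. finite G \<and> G \<subseteq> V \<and> \<delta> > 0 \<longrightarrow>
           (\<exists>f\<in>A i. \<forall>g\<in>G. \<bar>p f g - p c g\<bar> < \<delta>))"
      using neg cK by (intro notI) (elim notE bexI[rotated])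
    then obtain i G \<delta> where "i \<in> I" "finite G" "G \<subseteq> V" "\<delta> > 0"
        "\<forall>f\<in>A i. \<not> (\<forall>g\<in>G. \<bar>p f g - p c g\<bar> < \<delta>)"
      by auto
    then show ?thesis unfolding Q_def by (intro exI[of _ "(i, G, \<delta>)"]) simp
  qed
  then have "\<forall>c\<in>K. \<exists>t. Q c t" by blast
  from bchoice[OF this] obtain t where t: "\<forall>c\<in>K. Q c (t c)" by (elim exE)
  define ii where "ii c = fst (t c)" for c
  define GG where "GG c = fst (snd (t c))" for c
  define dd where "dd c = snd (snd (t c))" for c
  have B: "ii c \<in> I \<and> finite (GG c) \<and> GG c \<subseteq> V \<and> dd c > 0 \<and>
           (\<forall>f\<in>A (ii c). \<not> (\<forall>g\<in>GG c. \<bar>p f g - p c g\<bar> < dd c))" if "c \<in> K" for c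
    using bspec[OF t that] unfolding Q_def ii_def GG_def dd_def .
  define N where "N c = {y\<in>W. \<forall>g\<in>GG c. \<bar>p y g - p c g\<bar> < dd c}" for c
  have KW: "K \<subseteq> W" using K compactin_subset_topspace topspace_weak by metis
  have opN: "openin (weak_topology W V p) (N c)" if "c \<in> K" for c
    unfolding N_def using B[OF that] by (intro openin_weak_basic) auto
  have cN: "c \<in> N c" if "c \<in> K" for c
    using KW that B[OF that] unfolding N_def by auto
  have cov: "K \<subseteq> \<Union>(N ` K)" using cN by blast
  have opc: "\<forall>U\<in>N ` K. openin (weak_topology W V p) U" using opN by blast
  have "\<exists>\<F>. finite \<F> \<and> \<F> \<subseteq> N ` K \<and> K \<subseteq> \<Union>\<F>"
    using K unfolding compactin_def
    by (elim conjE allE[of _ "N ` K"]) (use cov opc in blast)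
  then obtain \<F> where F: "finite \<F>" "\<F> \<subseteq> N ` K" "K \<subseteq> \<Union>\<F>" by blast
  then obtain C where C: "C \<subseteq> K" "finite C" "\<F> = N ` C"
    by (meson finite_subset_image)
  have fin: "finite (ii ` C)" using C by simp
  have sub: "ii ` C \<subseteq> I" using C B by blast
  obtain f where f: "f \<in> K" "\<forall>j\<in>ii ` C. f \<in> A j"
    using fip[OF fin sub] by blast
  obtain c where c: "c \<in> C" "f \<in> N c" using F(3) C(3) f(1) by blast
  have cK: "c \<in> K" using c C by blast
  have fA: "f \<in> A (ii c)" using f c by auto
  have "\<forall>g\<in>GG c. \<bar>p f g - p c g\<bar> < dd c" using c(2) unfolding N_def by simp
  then show False using B[OF cK] fA by blast
qed

lemma integrable_mult_bdd:
  fixes f g :: "'a \<Rightarrow> real"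
  assumes f: "integrable \<mu> f" and g: "g \<in> borel_measurable \<mu>" and B: "AE x in \<mu>. \<bar>g x\<bar> \<le> B"
  shows "integrable \<mu> (\<lambda>x. f x * g x)"
proof (rule Bochner_Integration.integrable_bound[where f="\<lambda>x. B * f x"])
  show "integrable \<mu> (\<lambda>x. B * f x)" using f by simp
  show "(\<lambda>x. f x * g x) \<in> borel_measurable \<mu>"
    using borel_measurable_integrable[OF f] g by (rule borel_measurable_times)
  show "AE x in \<mu>. norm (f x * g x) \<le> norm (B * f x)"
    using B
  proof eventually_elim
    fix x assume b: "\<bar>g x\<bar> \<le> B"
    then have "B \<ge> 0" by linarith
    have "\<bar>f x\<bar> * \<bar>g x\<bar> \<le> \<bar>f x\<bar> * B" using b by (rule mult_left_mono) simp
    then show "norm (f x * g x) \<le> norm (B * f x)" using \<open>B \<ge> 0\<close> by (simp add: abs_mult mult.commute)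
  qed
qed

lemma LinfE:
  assumes "g \<in> Linf \<mu>"
  obtains C where "g \<in> borel_measurable \<mu>" "AE x in \<mu>. \<bar>g x\<bar> \<le> C" "C \<ge> 0"
proof -
  from assms obtain C where g: "g \<in> borel_measurable \<mu>" and C: "AE x in \<mu>. \<bar>g x\<bar> \<le> C"
    unfolding Linf_def by blast
  from C have "AE x in \<mu>. \<bar>g x\<bar> \<le> max C 0" by eventually_elim simp
  then show ?thesis using that[OF g] by simp
qed

lemma LinfI: "g \<in> borel_measurable \<mu> \<Longrightarrow> AE x in \<mu>. \<bar>g x\<bar> \<le> C \<Longrightarrow> g \<in> Linf \<mu>"
  unfolding Linf_def by blast

lemma L1_iff: "f \<in> L1 \<mu> \<longleftrightarrow> integrable \<mu> f"
  by (simp add: L1_def)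

lemma pairing_integrable:
  assumes "f \<in> L1 \<mu>" "g \<in> Linf \<mu>"
  shows "integrable \<mu> (\<lambda>x. f x * g x)"
proof -
  obtain C where "g \<in> borel_measurable \<mu>" "AE x in \<mu>. \<bar>g x\<bar> \<le> C" using LinfE[OF assms(2)] by blast
  then show ?thesis using assms(1) unfolding L1_iff by (intro integrable_mult_bdd)
qed

lemma dual_lin:
  assumes "\<phi> \<in> L1_dual \<mu>" "f \<in> L1 \<mu>" "h \<in> L1 \<mu>"
  shows "\<phi> (\<lambda>x. a * f x + b * h x) = a * \<phi> f + b * \<phi> h"
proof -
  have "\<forall>f\<in>L1 \<mu>. \<forall>h\<in>L1 \<mu>. \<forall>a b::real. \<phi> (\<lambda>x. a * f x + b * h x) = a * \<phi> f + b * \<phi> h"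
    using assms(1) unfolding L1_dual_def by blast
  then show ?thesis using assms(2,3) by blast
qed

lemma dual_bound:
  assumes "\<phi> \<in> L1_dual \<mu>"
  obtains C where "C \<ge> 0" "\<And>f. f \<in> L1 \<mu> \<Longrightarrow> \<bar>\<phi> f\<bar> \<le> C * (LINT x|\<mu>. \<bar>f x\<bar>)"
proof -
  from assms obtain C where C: "\<forall>f\<in>L1 \<mu>. \<bar>\<phi> f\<bar> \<le> C * (LINT x|\<mu>. \<bar>f x\<bar>)"
    unfolding L1_dual_def by blast
  have "\<bar>\<phi> f\<bar> \<le> max C 0 * (LINT x|\<mu>. \<bar>f x\<bar>)" if "f \<in> L1 \<mu>" for f
  proof -
    have "0 \<le> (LINT x|\<mu>. \<bar>f x\<bar>)" by (rule integral_nonneg_AE) simp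
    then have "C * (LINT x|\<mu>. \<bar>f x\<bar>) \<le> max C 0 * (LINT x|\<mu>. \<bar>f x\<bar>)"
      by (intro mult_right_mono) simp_all
    then show ?thesis using C that by force
  qed
  then show ?thesis using that[of "max C 0"] by simp
qed

lemma dual_add:
  assumes "\<phi> \<in> L1_dual \<mu>" "f \<in> L1 \<mu>" "h \<in> L1 \<mu>"
  shows "\<phi> (\<lambda>x. f x + h x) = \<phi> f + \<phi> h"
  using dual_lin[OF assms, of 1 1] by simp

lemma dual_scale:
  assumes "\<phi> \<in> L1_dual \<mu>" "f \<in> L1 \<mu>"
  shows "\<phi> (\<lambda>x. a * f x) = a * \<phi> f"
  using dual_lin[OF assms assms(2), of a 0] by simp

lemma dual_diff:
  assumes "\<phi> \<in> L1_dual \<mu>" "f \<in> L1 \<mu>" "h \<in> L1 \<mu>"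
  shows "\<phi> (\<lambda>x. f x - h x) = \<phi> f - \<phi> h"
  using dual_lin[OF assms, of 1 "-1"] by simp

lemma dual_zero:
  assumes "\<phi> \<in> L1_dual \<mu>"
  shows "\<phi> (\<lambda>x. 0) = 0"
proof -
  have z: "(\<lambda>x. 0::real) \<in> L1 \<mu>" unfolding L1_iff by simp
  show ?thesis using dual_scale[OF assms z, of 0] by simp
qed

lemma dual_cont:
  assumes \<phi>: "\<phi> \<in> L1_dual \<mu>"
    and s: "\<And>i. s i \<in> L1 \<mu>" and f: "f \<in> L1 \<mu>"
    and lim: "\<And>x. x \<in> space \<mu> \<Longrightarrow> (\<lambda>i. s i x) \<longlonglongrightarrow> f x"
    and w: "integrable \<mu> w" and bnd: "\<And>i x. x \<in> space \<mu> \<Longrightarrow> \<bar>s i x\<bar> \<le> w x"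
  shows "(\<lambda>i. \<phi> (s i)) \<longlonglongrightarrow> \<phi> f"
proof -
  obtain C where C: "C \<ge> 0" "\<And>f. f \<in> L1 \<mu> \<Longrightarrow> \<bar>\<phi> f\<bar> \<le> C * (LINT x|\<mu>. \<bar>f x\<bar>)"
    using dual_bound[OF \<phi>] by blast
  have si: "integrable \<mu> (s i)" for i using s unfolding L1_iff .
  have fi: "integrable \<mu> f" using f unfolding L1_iff .
  have "(\<lambda>i. LINT x|\<mu>. \<bar>s i x - f x\<bar>) \<longlonglongrightarrow> (LINT x|\<mu>. 0)"
  proof (rule integral_dominated_convergence[where w="\<lambda>x. w x + \<bar>f x\<bar>"])
    show "(\<lambda>x. 0::real) \<in> borel_measurable \<mu>" by simp
    show "(\<lambda>x. \<bar>s i x - f x\<bar>) \<in> borel_measurable \<mu>" for i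
      using si fi by measurable
    show "integrable \<mu> (\<lambda>x. w x + \<bar>f x\<bar>)" using w fi by simp
    show "AE x in \<mu>. (\<lambda>i. \<bar>s i x - f x\<bar>) \<longlonglongrightarrow> 0"
    proof (rule AE_I2)
      fix x assume "x \<in> space \<mu>"
      then have "(\<lambda>i. s i x - f x) \<longlonglongrightarrow> 0" using lim by (intro LIM_zero) simp
      then show "(\<lambda>i. \<bar>s i x - f x\<bar>) \<longlonglongrightarrow> 0" by (rule tendsto_rabs_zero)
    qed
    show "AE x in \<mu>. norm \<bar>s i x - f x\<bar> \<le> w x + \<bar>f x\<bar>" for i
    proof (rule AE_I2)
      fix x assume "x \<in> space \<mu>"
      then have "\<bar>s i x\<bar> \<le> w x" by (rule bnd)
      then show "norm \<bar>s i x - f x\<bar> \<le> w x + \<bar>f x\<bar>" by simp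
    qed
  qed
  then have I0: "(\<lambda>i. LINT x|\<mu>. \<bar>s i x - f x\<bar>) \<longlonglongrightarrow> 0" by simp
  have "(\<lambda>i. \<phi> (s i) - \<phi> f) \<longlonglongrightarrow> 0"
  proof (rule Lim_null_comparison)
    show "\<forall>\<^sub>F i in sequentially. norm (\<phi> (s i) - \<phi> f) \<le> C * (LINT x|\<mu>. \<bar>s i x - f x\<bar>)"
    proof (rule always_eventually, rule allI)
      fix i
      have d: "(\<lambda>x. s i x - f x) \<in> L1 \<mu>" using si fi unfolding L1_iff by simp
      have "\<phi> (s i) - \<phi> f = \<phi> (\<lambda>x. s i x - f x)" using dual_diff[OF \<phi> s f] by simp
      then show "norm (\<phi> (s i) - \<phi> f) \<le> C * (LINT x|\<mu>. \<bar>s i x - f x\<bar>)" using C(2)[OF d] by simp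
    qed
    show "(\<lambda>i. C * (LINT x|\<mu>. \<bar>s i x - f x\<bar>)) \<longlonglongrightarrow> 0"
      using tendsto_mult_right_zero[OF I0, of C] by simp
  qed
  then show ?thesis by (rule LIM_zero_cancel)
qed


lemma abs_indicator_real: "\<bar>indicator A x :: real\<bar> = indicator A x"
  by (simp add: indicator_def)

lemma rep_finite:
  assumes \<phi>: "\<phi> \<in> L1_dual \<mu>" and E: "E \<in> sets \<mu>" "emeasure \<mu> E < \<infinity>"
  shows "\<exists>g\<in>Linf \<mu>. \<forall>f\<in>L1 \<mu>. \<phi> (\<lambda>x. indicator E x * f x) = pairing \<mu> f g"
proof -
  obtain C where C: "C \<ge> 0" "\<And>f. f \<in> L1 \<mu> \<Longrightarrow> \<bar>\<phi> f\<bar> \<le> C * (LINT x|\<mu>. \<bar>f x\<bar>)"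
    using dual_bound[OF \<phi>] by blast
  define \<nu> where "\<nu> A = \<phi> (indicator (A \<inter> E))" for A
  have finAE: "emeasure \<mu> (A \<inter> E) < \<infinity>" for A
    using emeasure_mono[of "A \<inter> E" E \<mu>] E by auto
  have AEs: "A \<inter> E \<in> sets \<mu>" if "A \<in> sets \<mu>" for A using that E by auto
  have indL1: "(indicator (A \<inter> E) :: 'a \<Rightarrow> real) \<in> L1 \<mu>" if "A \<in> sets \<mu>" for A
    unfolding L1_iff using AEs[OF that] finAE[of A] by (rule integrable_real_indicator)
  have intind: "(LINT x|\<mu>. indicator (A \<inter> E) x) = measure \<mu> (A \<inter> E)" if "A \<in> sets \<mu>" for A
  proof -
    have "A \<inter> E \<inter> space \<mu> = A \<inter> E" using sets.sets_into_space[OF AEs[OF that]] by blast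
    then show ?thesis by simp
  qed
  have nu_bound: "\<bar>\<nu> A\<bar> \<le> C * measure \<mu> (A \<inter> E)" if "A \<in> sets \<mu>" for A
    using C(2)[OF indL1[OF that]] intind[OF that] unfolding \<nu>_def abs_indicator_real by simp
  have nu_add: "\<nu> (A \<union> B) = \<nu> A + \<nu> B" if "A \<in> sets \<mu>" "B \<in> sets \<mu>" "A \<inter> B = {}" for A B
  proof -
    have "indicator ((A \<union> B) \<inter> E) = (\<lambda>x. indicator (A \<inter> E) x + indicator (B \<inter> E) x :: real)"
      using that(3) by (auto simp: indicator_def fun_eq_iff)
    then show ?thesis unfolding \<nu>_def using dual_add[OF \<phi> indL1[OF that(1)] indL1[OF that(2)]] by simp
  qed
  define r where "r A = \<nu> A + C * measure \<mu> (A \<inter> E)" for A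
  have r_nonneg: "r A \<ge> 0" if "A \<in> sets \<mu>" for A
    using nu_bound[OF that] unfolding r_def by linarith
  have r_add: "r (A \<union> B) = r A + r B" if "A \<in> sets \<mu>" "B \<in> sets \<mu>" "A \<inter> B = {}" for A B
  proof -
    have "measure \<mu> ((A \<union> B) \<inter> E) = measure \<mu> (A \<inter> E) + measure \<mu> (B \<inter> E)"
    proof -
      have "(A \<union> B) \<inter> E = (A \<inter> E) \<union> (B \<inter> E)" by blast
      moreover have "measure \<mu> ((A \<inter> E) \<union> (B \<inter> E)) = measure \<mu> (A \<inter> E) + measure \<mu> (B \<inter> E)"
        using finAE[of A] finAE[of B] AEs[OF that(1)] AEs[OF that(2)] that(3)
        by (intro measure_Union) auto
      ultimately show ?thesis by simp
    qed
    then show ?thesis unfolding r_def using nu_add[OF that] by (simp add: algebra_simps)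
  qed
  have r_empty: "r {} = 0"
  proof -
    have "indicator ({} \<inter> E) = (\<lambda>x. 0::real)" by (simp add: fun_eq_iff)
    then show ?thesis unfolding r_def \<nu>_def using dual_zero[OF \<phi>] by simp
  qed
  have r_fin: "r (\<Union>i<n. A i) = (\<Sum>i<n. r (A i))"
    if A: "range A \<subseteq> sets \<mu>" "disjoint_family A" for A :: "nat \<Rightarrow> 'a set" and n
  proof (induct n)
    case 0 then show ?case using r_empty by simp
  next
    case (Suc n)
    have eq: "(\<Union>i<Suc n. A i) = (\<Union>i<n. A i) \<union> A n" by (auto simp: lessThan_Suc)
    have m1: "(\<Union>i<n. A i) \<in> sets \<mu>" using A(1) by auto
    have m2: "A n \<in> sets \<mu>" using A(1) by auto
    have dj1: "A i \<inter> A n = {}" if "i < n" for i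
      by (rule disjoint_family_onD[OF A(2)]) (use that in auto)
    have dj: "(\<Union>i<n. A i) \<inter> A n = {}"
      using dj1 by blast
    show ?case unfolding eq r_add[OF m1 m2 dj] Suc by simp
  qed
  have r_lim: "(\<lambda>n. r (\<Union>i<n. A i)) \<longlonglongrightarrow> r (\<Union>i. A i)"
    if A: "range A \<subseteq> sets \<mu>" for A :: "nat \<Rightarrow> 'a set"
  proof -
    have mU: "(\<Union>i. A i) \<in> sets \<mu>" using A by auto
    have mn: "(\<Union>i<n. A i) \<in> sets \<mu>" for n using A by auto
    have ptw: "(\<lambda>n. indicator ((\<Union>i<n. A i) \<inter> E) x :: real) \<longlonglongrightarrow> indicator ((\<Union>i. A i) \<inter> E) x" for x
      unfolding indicator_inter_arith by (intro tendsto_mult LIMSEQ_indicator_UN tendsto_const)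
    have bnd: "\<bar>indicator ((\<Union>i<n. A i) \<inter> E) x :: real\<bar> \<le> indicator E x" for n x
      by (simp add: indicator_def)
    have intE: "integrable \<mu> (indicator E :: 'a \<Rightarrow> real)" using E by (rule integrable_real_indicator)
    have l1: "(\<lambda>n. \<nu> (\<Union>i<n. A i)) \<longlonglongrightarrow> \<nu> (\<Union>i. A i)"
      unfolding \<nu>_def
      by (rule dual_cont[OF \<phi> indL1[OF mn] indL1[OF mU] ptw intE bnd])
    have "(\<lambda>n. LINT x|\<mu>. indicator ((\<Union>i<n. A i) \<inter> E) x) \<longlonglongrightarrow> (LINT x|\<mu>. indicator ((\<Union>i. A i) \<inter> E) x :: real)"
    proof (rule integral_dominated_convergence[where w="indicator E"])
      show "(indicator ((\<Union>i. A i) \<inter> E) :: 'a \<Rightarrow> real) \<in> borel_measurable \<mu>"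
        using AEs[OF mU] by simp
      show "(\<lambda>x. indicator ((\<Union>i<n. A i) \<inter> E) x :: real) \<in> borel_measurable \<mu>" for n
        using AEs[OF mn] by simp
      show "integrable \<mu> (indicator E :: 'a \<Rightarrow> real)" by (rule intE)
      show "AE x in \<mu>. (\<lambda>n. indicator ((\<Union>i<n. A i) \<inter> E) x :: real) \<longlonglongrightarrow> indicator ((\<Union>i. A i) \<inter> E) x"
        using ptw by simp
      show "AE x in \<mu>. norm (indicator ((\<Union>i<n. A i) \<inter> E) x :: real) \<le> indicator E x" for n
        using bnd by simp
    qed
    then have l2: "(\<lambda>n. measure \<mu> ((\<Union>i<n. A i) \<inter> E)) \<longlonglongrightarrow> measure \<mu> ((\<Union>i. A i) \<inter> E)"
      using intind[OF mn] intind[OF mU] by simp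
    show ?thesis unfolding r_def by (intro tendsto_add l1 tendsto_mult_left l2)
  qed
  define N where "N = measure_of (space \<mu>) (sets \<mu>) (\<lambda>A. ennreal (r A))"
  have pos: "positive (sets \<mu>) (\<lambda>A. ennreal (r A))"
    unfolding positive_def using r_empty by simp
  have ca: "countably_additive (sets \<mu>) (\<lambda>A. ennreal (r A))"
    unfolding countably_additive_def
  proof (intro allI impI)
    fix A :: "nat \<Rightarrow> 'a set"
    assume A: "range A \<subseteq> sets \<mu>" "disjoint_family A" "\<Union>(range A) \<in> sets \<mu>"
    have "(\<lambda>n. \<Sum>i<n. r (A i)) \<longlonglongrightarrow> r (\<Union>i. A i)"
      using r_lim[OF A(1)] unfolding r_fin[OF A(1,2)] .
    then have sm: "(\<lambda>i. r (A i)) sums r (\<Union>i. A i)" unfolding sums_def .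
    have nn: "0 \<le> r (A i)" for i using A(1) r_nonneg by auto
    have "(\<Sum>i. ennreal (r (A i))) = ennreal (\<Sum>i. r (A i))"
      using nn sums_summable[OF sm] by (rule suminf_ennreal2)
    then show "(\<Sum>i. ennreal (r (A i))) = ennreal (r (\<Union>(range A)))"
      using sums_unique[OF sm] by simp
  qed
  have emN: "emeasure N A = ennreal (r A)" if "A \<in> sets \<mu>" for A
    unfolding N_def by (rule emeasure_measure_of_sigma[OF sets.sigma_algebra_axioms pos ca that])
  have setsN: "sets N = sets \<mu>" unfolding N_def by simp
  define M' where "M' = density \<mu> (indicator E)"
  have emM': "emeasure M' A = emeasure \<mu> (E \<inter> A)" if "A \<in> sets \<mu>" for A
  proof -
    have "emeasure M' A = (\<integral>\<^sup>+x. indicator E x * indicator A x \<partial>\<mu>)"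
      unfolding M'_def using E(1) that by (intro emeasure_density) simp_all
    also have "\<dots> = (\<integral>\<^sup>+x. indicator (E \<inter> A) x \<partial>\<mu>)"
      by (simp add: indicator_inter_arith)
    also have "\<dots> = emeasure \<mu> (E \<inter> A)" using E(1) that by simp
    finally show ?thesis .
  qed
  have setsM': "sets M' = sets \<mu>" unfolding M'_def by simp
  have spM': "space M' = space \<mu>" unfolding M'_def by simp
  have finM': "finite_measure M'"
  proof
    have "emeasure M' (space M') = emeasure \<mu> (E \<inter> space \<mu>)" using emM' spM' by simp
    also have "\<dots> = emeasure \<mu> E" using sets.sets_into_space[OF E(1)] by (simp add: Int_absorb2)
    finally show "emeasure M' (space M') \<noteq> \<infinity>" using E(2) by simp
  qed
  interpret M': finite_measure M' by (rule finM')
  have ac: "absolutely_continuous M' N"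
    unfolding absolutely_continuous_def
  proof
    fix A assume "A \<in> null_sets M'"
    then have A: "A \<in> sets \<mu>" "emeasure M' A = 0" using setsM' by auto
    then have "emeasure \<mu> (A \<inter> E) = 0" using emM'[OF A(1)] by (simp add: Int_commute)
    then have "measure \<mu> (A \<inter> E) = 0" by (simp add: measure_def)
    then have "\<nu> A = 0" using nu_bound[OF A(1)] by simp
    then have "r A = 0" using \<open>measure \<mu> (A \<inter> E) = 0\<close> unfolding r_def by simp
    then show "A \<in> null_sets N" using emN[OF A(1)] A(1) setsN by (intro null_setsI) auto
  qed
  obtain h where h: "h \<in> borel_measurable M'" "density M' h = N"
    using M'.Radon_Nikodym[OF ac] setsN setsM' by auto
  have hm[measurable]: "h \<in> borel_measurable \<mu>"
    using h(1) unfolding M'_def by simp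
  have key: "ennreal (r A) = (\<integral>\<^sup>+x. indicator E x * (h x * indicator A x) \<partial>\<mu>)" if A: "A \<in> sets \<mu>" for A
  proof -
    have "ennreal (r A) = emeasure N A" using emN[OF A] by simp
    also have "\<dots> = emeasure (density M' h) A" using h(2) by simp
    also have "\<dots> = (\<integral>\<^sup>+x. h x * indicator A x \<partial>M')"
      using A setsM' h(1) by (intro emeasure_density) simp_all
    also have "\<dots> = (\<integral>\<^sup>+x. indicator E x * (h x * indicator A x) \<partial>\<mu>)"
      unfolding M'_def using E(1) A by (intro nn_integral_density) simp_all
    finally show ?thesis .
  qed
  have hE: "AE x in \<mu>. indicator E x * h x \<le> ennreal (2 * C)"
  proof (rule AE_upper_bound_inf_ennreal)
    fix e :: real assume e: "e > 0"
    define B where "B = {x\<in>space \<mu>. x \<in> E \<and> ennreal (2 * C + e) \<le> h x}"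
    have Bm: "B \<in> sets \<mu>" unfolding B_def using E(1) by measurable
    have BE: "B \<subseteq> E" unfolding B_def by blast
    then have BEE: "B \<inter> E = B" by blast
    have finB: "emeasure \<mu> B < \<infinity>" using finAE[of B] BEE by simp
    have "ennreal (2 * C + e) * emeasure \<mu> B = (\<integral>\<^sup>+x. ennreal (2 * C + e) * indicator B x \<partial>\<mu>)"
      using Bm by (simp add: nn_integral_cmult_indicator)
    also have "\<dots> \<le> (\<integral>\<^sup>+x. indicator E x * (h x * indicator B x) \<partial>\<mu>)"
    proof (rule nn_integral_mono)
      fix x assume "x \<in> space \<mu>"
      show "ennreal (2 * C + e) * indicator B x \<le> indicator E x * (h x * indicator B x)"
      proof (cases "x \<in> B")
        case True
        then have "x \<in> E" "ennreal (2 * C + e) \<le> h x" unfolding B_def by auto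
        then show ?thesis using True by simp
      next
        case False
        then show ?thesis by simp
      qed
    qed
    also have "\<dots> = ennreal (r B)" using key[OF Bm] by simp
    also have "\<dots> \<le> ennreal (2 * C * measure \<mu> B)"
    proof -
      have "r B \<le> 2 * C * measure \<mu> B"
        using nu_bound[OF Bm] unfolding r_def BEE by linarith
      then show ?thesis by (rule ennreal_leI)
    qed
    finally have le: "ennreal (2 * C + e) * emeasure \<mu> B \<le> ennreal (2 * C * measure \<mu> B)" .
    have "emeasure \<mu> B = ennreal (measure \<mu> B)" using finB by (simp add: emeasure_eq_ennreal_measure)
    then have "ennreal ((2 * C + e) * measure \<mu> B) \<le> ennreal (2 * C * measure \<mu> B)"
      using le C(1) e by (simp add: ennreal_mult)
    then have "(2 * C + e) * measure \<mu> B \<le> 2 * C * measure \<mu> B"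
      using C(1) by (subst (asm) ennreal_le_iff) simp_all
    then have "e * measure \<mu> B \<le> 0" by (simp add: algebra_simps)
    then have "measure \<mu> B = 0" using e measure_nonneg[of \<mu> B] by (simp add: mult_le_0_iff)
    then have "emeasure \<mu> B = 0" using finB by (simp add: emeasure_eq_ennreal_measure)
    then have "B \<in> null_sets \<mu>" using Bm by (intro null_setsI)
    then have "AE x in \<mu>. x \<notin> B" by (rule AE_not_in)
    then show "AE x in \<mu>. indicator E x * h x \<le> ennreal (2 * C) + ennreal e"
    proof (rule AE_mp, intro AE_I2 impI)
      fix x assume x: "x \<in> space \<mu>" "x \<notin> B"
      show "indicator E x * h x \<le> ennreal (2 * C) + ennreal e"
      proof (cases "x \<in> E")
        case True
        then have "h x < ennreal (2 * C + e)" using x unfolding B_def by auto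
        moreover have "ennreal (2 * C + e) = ennreal (2 * C) + ennreal e" using C(1) e by simp
        ultimately show ?thesis using True by simp
      next
        case False
        then show ?thesis by simp
      qed
    qed
  qed
  have hE': "AE x in \<mu>. x \<in> E \<longrightarrow> h x \<le> ennreal (2 * C)"
    using hE by eventually_elim (auto simp: indicator_def)
  define g where "g x = indicator E x * (enn2real (h x) - C)" for x
  have gm[measurable]: "g \<in> borel_measurable \<mu>" unfolding g_def using E(1) by measurable
  have gb: "AE x in \<mu>. \<bar>g x\<bar> \<le> C"
    using hE'
  proof eventually_elim
    fix x assume hx: "x \<in> E \<longrightarrow> h x \<le> ennreal (2 * C)"
    show "\<bar>g x\<bar> \<le> C"
    proof (cases "x \<in> E")
      case True
      then have "enn2real (h x) \<le> 2 * C" using hx C(1) by (intro enn2real_leI) auto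
      moreover have "0 \<le> enn2real (h x)" by simp
      ultimately have "\<bar>enn2real (h x) - C\<bar> \<le> C" by (simp add: abs_le_iff)
      then show ?thesis using True unfolding g_def by simp
    next
      case False
      then show ?thesis using C(1) unfolding g_def by simp
    qed
  qed
  have gLinf: "g \<in> Linf \<mu>" using gm gb by (rule LinfI)
  define k where "k x = indicator E x * enn2real (h x)" for x
  have km[measurable]: "k \<in> borel_measurable \<mu>" unfolding k_def using E(1) by measurable
  have kb: "AE x in \<mu>. \<bar>k x\<bar> \<le> 2 * C"
    using hE'
  proof eventually_elim
    fix x assume hx: "x \<in> E \<longrightarrow> h x \<le> ennreal (2 * C)"
    show "\<bar>k x\<bar> \<le> 2 * C"
    proof (cases "x \<in> E")
      case True
      then have "enn2real (h x) \<le> 2 * C" using hx C(1) by (intro enn2real_leI) auto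
      then show ?thesis using True unfolding k_def by simp
    next
      case False
      then show ?thesis using C(1) unfolding k_def by simp
    qed
  qed
  have g_eq: "g x = k x - C * indicator E x" for x
    unfolding g_def k_def by (simp add: algebra_simps)
  have intk: "(LINT x|\<mu>. indicator A x * k x) = r A" if A: "A \<in> sets \<mu>" for A
  proof -
    have iA: "integrable \<mu> (indicator A :: 'a \<Rightarrow> real) \<or> True" by simp
    have ik: "integrable \<mu> (\<lambda>x. indicator A x * k x)"
    proof -
      have "(\<lambda>x. indicator A x * k x) = (\<lambda>x. indicator (A \<inter> E) x * k x)"
        unfolding k_def by (auto simp: indicator_def fun_eq_iff)
      moreover have "integrable \<mu> (\<lambda>x. indicator (A \<inter> E) x * k x)"
        using indL1[OF A] km kb unfolding L1_iff by (rule integrable_mult_bdd)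
      ultimately show ?thesis by simp
    qed
    have nn: "AE x in \<mu>. 0 \<le> indicator A x * k x" unfolding k_def by simp
    have "ennreal (LINT x|\<mu>. indicator A x * k x) = (\<integral>\<^sup>+x. ennreal (indicator A x * k x) \<partial>\<mu>)"
      using nn_integral_eq_integral[OF ik nn] by simp
    also have "\<dots> = (\<integral>\<^sup>+x. indicator E x * (h x * indicator A x) \<partial>\<mu>)"
    proof (rule nn_integral_cong_AE)
      show "AE x in \<mu>. ennreal (indicator A x * k x) = indicator E x * (h x * indicator A x)"
        using hE'
      proof eventually_elim
        fix x assume hx: "x \<in> E \<longrightarrow> h x \<le> ennreal (2 * C)"
        show "ennreal (indicator A x * k x) = indicator E x * (h x * indicator A x)"
        proof (cases "x \<in> E \<and> x \<in> A")
          case True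
          then have "h x < top" using hx le_less_trans[of "h x" "ennreal (2 * C)" top] by simp
          then show ?thesis using True unfolding k_def by simp
        next
          case False
          then show ?thesis unfolding k_def by (auto simp: indicator_def)
        qed
      qed
    qed
    also have "\<dots> = ennreal (r A)" using key[OF A] by simp
    finally have "ennreal (LINT x|\<mu>. indicator A x * k x) = ennreal (r A)" .
    moreover have "0 \<le> (LINT x|\<mu>. indicator A x * k x)" using nn by (rule integral_nonneg_AE)
    ultimately show ?thesis using r_nonneg[OF A] by simp
  qed
  have intg: "(LINT x|\<mu>. indicator A x * g x) = \<nu> A" if A: "A \<in> sets \<mu>" for A
  proof -
    have ik: "integrable \<mu> (\<lambda>x. indicator A x * k x)"
    proof -
      have "(\<lambda>x. indicator A x * k x) = (\<lambda>x. indicator (A \<inter> E) x * k x)"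
        unfolding k_def by (auto simp: indicator_def fun_eq_iff)
      moreover have "integrable \<mu> (\<lambda>x. indicator (A \<inter> E) x * k x)"
        using indL1[OF A] km kb unfolding L1_iff by (rule integrable_mult_bdd)
      ultimately show ?thesis by simp
    qed
    have ie: "integrable \<mu> (\<lambda>x. C * indicator (A \<inter> E) x)"
      using indL1[OF A] unfolding L1_iff by simp
    have "(\<lambda>x. indicator A x * g x) = (\<lambda>x. indicator A x * k x - C * indicator (A \<inter> E) x)"
      unfolding g_eq by (auto simp: indicator_def fun_eq_iff)
    then have "(LINT x|\<mu>. indicator A x * g x) = (LINT x|\<mu>. indicator A x * k x) - (LINT x|\<mu>. C * indicator (A \<inter> E) x)"
      using Bochner_Integration.integral_diff[OF ik ie] by simp
    also have "\<dots> = r A - C * measure \<mu> (A \<inter> E)" using intk[OF A] intind[OF A] by simp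
    finally show ?thesis unfolding r_def by simp
  qed
  have main: "\<phi> (\<lambda>x. indicator E x * f x) = pairing \<mu> f g" if f: "f \<in> L1 \<mu>" for f
  proof -
    have "integrable \<mu> f" using f unfolding L1_iff .
    then show ?thesis
    proof (induct rule: integrable_induct)
      case (base A c)
      have eq1: "(\<lambda>x. indicator E x * (indicator A x *\<^sub>R c)) = (\<lambda>x. c * indicator (A \<inter> E) x + 0 * indicator (A \<inter> E) x)"
        by (auto simp: indicator_def fun_eq_iff)
      have l: "\<phi> (\<lambda>x. indicator E x * (indicator A x *\<^sub>R c)) = c * \<nu> A"
        unfolding eq1 \<nu>_def using dual_lin[OF \<phi> indL1[OF base(1)] indL1[OF base(1)], of c 0] by simp
      have "pairing \<mu> (\<lambda>x. indicator A x *\<^sub>R c) g = (LINT x|\<mu>. c * (indicator A x * g x))"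
        unfolding pairing_def by (simp add: algebra_simps)
      also have "\<dots> = c * \<nu> A" using intg[OF base(1)] by simp
      finally show ?case using l by simp
    next
      case (add f1 f2)
      have L1a: "(\<lambda>x. indicator E x * f1 x) \<in> L1 \<mu>" "(\<lambda>x. indicator E x * f2 x) \<in> L1 \<mu>"
        using add(1,3) E(1) unfolding L1_iff
        by (auto intro: integrable_real_mult_indicator simp: mult.commute)
      have "\<phi> (\<lambda>x. indicator E x * (f1 x + f2 x)) = \<phi> (\<lambda>x. indicator E x * f1 x + indicator E x * f2 x)"
        by (simp add: algebra_simps)
      also have "\<dots> = \<phi> (\<lambda>x. indicator E x * f1 x) + \<phi> (\<lambda>x. indicator E x * f2 x)"
        using dual_add[OF \<phi> L1a] by simp
      also have "\<dots> = pairing \<mu> f1 g + pairing \<mu> f2 g" using add(2,4) by simp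
      also have "\<dots> = pairing \<mu> (\<lambda>x. f1 x + f2 x) g"
      proof -
        have fL: "f1 \<in> L1 \<mu>" "f2 \<in> L1 \<mu>" using add(1,3) unfolding L1_iff by auto
        have i1: "integrable \<mu> (\<lambda>x. f1 x * g x)" "integrable \<mu> (\<lambda>x. f2 x * g x)"
          using pairing_integrable[OF fL(1) gLinf] pairing_integrable[OF fL(2) gLinf] by auto
        show ?thesis unfolding pairing_def using Bochner_Integration.integral_add[OF i1] by (simp add: algebra_simps)
      qed
      finally show ?case .
    next
      case (lim f s)
      have sL1: "(\<lambda>x. indicator E x * s i x) \<in> L1 \<mu>" for i
        using integrable_real_mult_indicator[OF E(1) lim(1)[of i]] unfolding L1_iff
        by (simp add: mult.commute)
      have fL1: "(\<lambda>x. indicator E x * f x) \<in> L1 \<mu>"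
        using integrable_real_mult_indicator[OF E(1) lim(5)] unfolding L1_iff
        by (simp add: mult.commute)
      have t1: "(\<lambda>i. \<phi> (\<lambda>x. indicator E x * s i x)) \<longlonglongrightarrow> \<phi> (\<lambda>x. indicator E x * f x)"
      proof (rule dual_cont[OF \<phi> sL1 fL1])
        show "(\<lambda>i. indicator E x * s i x) \<longlonglongrightarrow> indicator E x * f x" if "x \<in> space \<mu>" for x
          using lim(3)[OF that] by (intro tendsto_mult tendsto_const)
        show "integrable \<mu> (\<lambda>x. 2 * \<bar>f x\<bar>)" using lim(5) by simp
        show "\<bar>indicator E x * s i x\<bar> \<le> 2 * \<bar>f x\<bar>" if "x \<in> space \<mu>" for i x
          using lim(4)[OF that, of i] by (auto simp: indicator_def)
      qed
      obtain Cg where Cg: "g \<in> borel_measurable \<mu>" "AE x in \<mu>. \<bar>g x\<bar> \<le> Cg" "Cg \<ge> 0"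
        using LinfE[OF gLinf] by blast
      have t2: "(\<lambda>i. LINT x|\<mu>. s i x * g x) \<longlonglongrightarrow> (LINT x|\<mu>. f x * g x)"
      proof (rule integral_dominated_convergence[where w="\<lambda>x. 2 * \<bar>f x\<bar> * Cg"])
        show "(\<lambda>x. f x * g x) \<in> borel_measurable \<mu>" using lim(5) by measurable
        show "(\<lambda>x. s i x * g x) \<in> borel_measurable \<mu>" for i using lim(1) by measurable
        show "integrable \<mu> (\<lambda>x. 2 * \<bar>f x\<bar> * Cg)" using lim(5) by simp
        show "AE x in \<mu>. (\<lambda>i. s i x * g x) \<longlonglongrightarrow> f x * g x"
          using lim(3) by (intro AE_I2 tendsto_mult tendsto_const) simp
        show "AE x in \<mu>. norm (s i x * g x) \<le> 2 * \<bar>f x\<bar> * Cg" for i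
          using Cg(2)
        proof (rule AE_mp, intro AE_I2 impI)
          fix x assume x: "x \<in> space \<mu>" "\<bar>g x\<bar> \<le> Cg"
          have "\<bar>s i x\<bar> \<le> 2 * \<bar>f x\<bar>" using lim(4)[OF x(1), of i] by simp
          then have "\<bar>s i x\<bar> * \<bar>g x\<bar> \<le> 2 * \<bar>f x\<bar> * Cg"
            using x(2) by (intro mult_mono) auto
          then show "norm (s i x * g x) \<le> 2 * \<bar>f x\<bar> * Cg" by (simp add: abs_mult)
        qed
      qed
      have eqs: "\<phi> (\<lambda>x. indicator E x * s i x) = (LINT x|\<mu>. s i x * g x)" for i
        using lim(2)[of i] unfolding pairing_def .
      have "(\<lambda>i. \<phi> (\<lambda>x. indicator E x * s i x)) \<longlonglongrightarrow> (LINT x|\<mu>. f x * g x)"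
        using t2 unfolding eqs .
      then have "\<phi> (\<lambda>x. indicator E x * f x) = (LINT x|\<mu>. f x * g x)"
        using t1 by (rule LIMSEQ_unique[rotated])
      then show ?case unfolding pairing_def .
    qed
  qed
  show ?thesis using gLinf main by blast
qed

definition tail :: "'a measure \<Rightarrow> ('a \<Rightarrow> real) \<Rightarrow> 'a set \<Rightarrow> real" where
  "tail \<mu> f E = (LINT x|\<mu>. (1 - indicator E x) * \<bar>f x\<bar>)"

lemma tail_integrable:
  fixes f :: "'a \<Rightarrow> real"
  assumes "integrable \<mu> f" "E \<in> sets \<mu>"
  shows "integrable \<mu> (\<lambda>x. (1 - indicator E x) * \<bar>f x\<bar>)"
proof -
  have m: "(\<lambda>x. 1 - indicator E x :: real) \<in> borel_measurable \<mu>" using assms(2) by measurable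
  have "integrable \<mu> (\<lambda>x. \<bar>f x\<bar> * (1 - indicator E x))"
    using assms(1) m
    by (rule integrable_mult_bdd[where f="\<lambda>x. \<bar>f x\<bar>" and g="\<lambda>x. 1 - indicator E x" and B=1, OF integrable_abs])
      (auto simp: indicator_def)
  then show ?thesis by (simp add: mult.commute)
qed

lemma tail_nonneg: "0 \<le> tail \<mu> f E"
  unfolding tail_def by (rule integral_nonneg_AE) (simp add: indicator_def)

lemma tail_mono:
  assumes "integrable \<mu> f" "E \<in> sets \<mu>" "E' \<in> sets \<mu>" "E \<subseteq> E'"
  shows "tail \<mu> f E' \<le> tail \<mu> f E"
  unfolding tail_def
  using assms by (intro integral_mono tail_integrable) (auto simp: indicator_def)

lemma abs_integral_le:
  fixes h w :: "'a \<Rightarrow> real"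
  assumes "integrable \<mu> h" "integrable \<mu> w" "\<And>x. x \<in> space \<mu> \<Longrightarrow> \<bar>h x\<bar> \<le> w x"
  shows "\<bar>LINT x|\<mu>. h x\<bar> \<le> (LINT x|\<mu>. w x)"
proof -
  have "\<bar>LINT x|\<mu>. h x\<bar> \<le> (LINT x|\<mu>. \<bar>h x\<bar>)" by (rule integral_abs_bound)
  also have "\<dots> \<le> (LINT x|\<mu>. w x)" using assms by (intro integral_mono) auto
  finally show ?thesis .
qed

lemma pairing_tail_bound:
  assumes f: "integrable \<mu> f" and E: "E \<in> sets \<mu>" and v: "v \<in> borel_measurable \<mu>"
    and vb: "\<And>x. \<bar>v x\<bar> \<le> 1"
  shows "\<bar>pairing \<mu> f (\<lambda>x. (1 - indicator E x) * v x)\<bar> \<le> tail \<mu> f E"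
  unfolding pairing_def tail_def
proof (rule abs_integral_le)
  have m: "(\<lambda>x. (1 - indicator E x) * v x :: real) \<in> borel_measurable \<mu>" using E v by measurable
  show "integrable \<mu> (\<lambda>x. f x * ((1 - indicator E x) * v x))"
    using f m
    by (rule integrable_mult_bdd[where f=f and g="\<lambda>x. (1 - indicator E x) * v x" and B=1])
      (use vb in \<open>auto simp: indicator_def\<close>)
  show "integrable \<mu> (\<lambda>x. (1 - indicator E x) * \<bar>f x\<bar>)" using f E by (rule tail_integrable)
  fix x
  have "\<bar>f x * ((1 - indicator E x) * v x)\<bar> = \<bar>f x\<bar> * (1 - indicator E x) * \<bar>v x\<bar>"
    by (simp add: abs_mult indicator_def)
  also have "\<dots> \<le> \<bar>f x\<bar> * (1 - indicator E x) * 1"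
    using vb[of x] by (intro mult_left_mono) (auto simp: indicator_def)
  finally show "\<bar>f x * ((1 - indicator E x) * v x)\<bar> \<le> (1 - indicator E x) * \<bar>f x\<bar>"
    by (simp add: mult.commute)
qed

lemma single_tight:
  assumes f: "integrable \<mu> f" and \<delta>: "\<delta> > 0"
  shows "\<exists>E\<in>sets \<mu>. emeasure \<mu> E < \<infinity> \<and> tail \<mu> f E \<le> \<delta>"
proof -
  define En where "En n = {x\<in>space \<mu>. 1 / real (Suc n) \<le> \<bar>f x\<bar>}" for n
  have fm[measurable]: "f \<in> borel_measurable \<mu>" using f by (rule borel_measurable_integrable)
  have Enm: "En n \<in> sets \<mu>" for n unfolding En_def by measurable
  have Enf: "emeasure \<mu> (En n) < \<infinity>" for n
  proof -
    have "emeasure \<mu> {x\<in>space \<mu>. \<bar>f x\<bar> \<ge> 1 / real (Suc n)} \<le> (1 / (1 / real (Suc n))) * (LINT x|\<mu>. \<bar>f x\<bar>)"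
      using f by (intro integral_Markov_inequality) auto
    also have "\<dots> < \<infinity>" by simp
    finally show ?thesis unfolding En_def by simp
  qed
  have lim: "(\<lambda>n. tail \<mu> f (En n)) \<longlonglongrightarrow> (LINT x|\<mu>. 0)"
    unfolding tail_def
  proof (rule integral_dominated_convergence[where w="\<lambda>x. \<bar>f x\<bar>"])
    show "(\<lambda>x. 0::real) \<in> borel_measurable \<mu>" by simp
    show "(\<lambda>x. (1 - indicator (En n) x) * \<bar>f x\<bar>) \<in> borel_measurable \<mu>" for n
      using Enm[of n] by measurable
    show "integrable \<mu> (\<lambda>x. \<bar>f x\<bar>)" using f by simp
    show "AE x in \<mu>. norm ((1 - indicator (En n) x) * \<bar>f x\<bar>) \<le> \<bar>f x\<bar>" for n
      by (intro AE_I2) (auto simp: indicator_def)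
    show "AE x in \<mu>. (\<lambda>n. (1 - indicator (En n) x) * \<bar>f x\<bar>) \<longlonglongrightarrow> 0"
    proof (rule AE_I2)
      fix x assume x: "x \<in> space \<mu>"
      show "(\<lambda>n. (1 - indicator (En n) x) * \<bar>f x\<bar>) \<longlonglongrightarrow> 0"
      proof (cases "f x = 0")
        case True
        then show ?thesis by simp
      next
        case False
        then have "\<bar>f x\<bar> > 0" by simp
        then obtain N where N: "1 / real (Suc N) < \<bar>f x\<bar>" using nat_approx_posE by blast
        have "\<forall>n\<ge>N. (1 - indicator (En n) x) * \<bar>f x\<bar> = 0"
        proof (intro allI impI)
          fix n assume "n \<ge> N"
          then have "1 / real (Suc n) \<le> 1 / real (Suc N)" by (intro divide_left_mono) auto
          then have "x \<in> En n" using N x unfolding En_def by simp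
          then show "(1 - indicator (En n) x) * \<bar>f x\<bar> = 0" by simp
        qed
        then have "eventually (\<lambda>n. (1 - indicator (En n) x) * \<bar>f x\<bar> = 0) sequentially"
          unfolding eventually_sequentially by blast
        then show ?thesis by (rule tendsto_eventually)
      qed
    qed
  qed
  then have "(\<lambda>n. tail \<mu> f (En n)) \<longlonglongrightarrow> 0" by simp
  then have "eventually (\<lambda>n. tail \<mu> f (En n) < \<delta>) sequentially"
    using \<delta> by (rule order_tendstoD(2))
  then obtain N where "tail \<mu> f (En N) < \<delta>" unfolding eventually_sequentially by blast
  then show ?thesis using Enm[of N] Enf[of N] by (intro bexI[of _ "En N"]) auto
qed

lemma finite_union_fin:
  assumes "finite J" "\<And>E. E \<in> J \<Longrightarrow> E \<in> sets \<mu> \<and> emeasure \<mu> E < \<infinity>"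
  shows "\<Union>J \<in> sets \<mu> \<and> emeasure \<mu> (\<Union>J) < \<infinity>"
  using assms
proof (induct J rule: finite_induct)
  case empty
  then show ?case by simp
next
  case (insert E J)
  have E: "E \<in> sets \<mu>" "emeasure \<mu> E < \<infinity>" using insert(4) by auto
  have J: "\<Union>J \<in> sets \<mu>" "emeasure \<mu> (\<Union>J) < \<infinity>" using insert(3,4) by auto
  have "emeasure \<mu> (E \<union> \<Union>J) \<le> emeasure \<mu> E + emeasure \<mu> (\<Union>J)"
    using E(1) J(1) by (rule emeasure_subadditive)
  also have "\<dots> < \<infinity>" using E(2) J(2) by simp
  finally show ?case using E(1) J(1) by simp
qed

lemma K_L1:
  assumes "compactin (weak_topology (L1 \<mu>) V p) K"
  shows "K \<subseteq> L1 \<mu>"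
  using compactin_subset_topspace[OF assms] unfolding topspace_weak .

lemma pairing_add:
  assumes "f \<in> L1 \<mu>" "u \<in> Linf \<mu>" "v \<in> Linf \<mu>"
  shows "pairing \<mu> f (\<lambda>x. u x + v x) = pairing \<mu> f u + pairing \<mu> f v"
proof -
  have "integrable \<mu> (\<lambda>x. f x * u x)" "integrable \<mu> (\<lambda>x. f x * v x)"
    using pairing_integrable assms by blast+
  then show ?thesis unfolding pairing_def
    using Bochner_Integration.integral_add by (simp add: distrib_left)
qed

lemma pairing_split:
  assumes "h \<in> L1 \<mu>" "u \<in> Linf \<mu>" "v \<in> Linf \<mu>" "\<And>x. w x = u x + v x"
  shows "pairing \<mu> h w = pairing \<mu> h u + pairing \<mu> h v"
proof -
  have "w = (\<lambda>x. u x + v x)" by (rule ext) (rule assms(4))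
  then show ?thesis using pairing_add[OF assms(1-3)] by simp
qed

lemma bdd_Linf: "v \<in> borel_measurable \<mu> \<Longrightarrow> (\<And>x. \<bar>v x\<bar> \<le> B) \<Longrightarrow> v \<in> Linf \<mu>"
  by (rule LinfI[where C=B]) auto

theorem tightness:
  assumes K: "compactin (weak_topology (L1 \<mu>) (Linf \<mu>) (pairing \<mu>)) K" and \<epsilon>: "\<epsilon> > 0"
  shows "\<exists>E\<in>sets \<mu>. emeasure \<mu> E < \<infinity> \<and> (\<forall>f\<in>K. tail \<mu> f E \<le> \<epsilon>)"
proof (rule ccontr)
  assume neg: "\<not> ?thesis"
  have bad: "\<exists>f\<in>K. tail \<mu> f E > \<epsilon>" if "E \<in> sets \<mu>" "emeasure \<mu> E < \<infinity>" for E
  proof -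
    have "\<not> (\<forall>f\<in>K. tail \<mu> f E \<le> \<epsilon>)" using neg that by blast
    then show ?thesis by (simp add: not_le)
  qed
  have KL1: "K \<subseteq> L1 \<mu>" using K by (rule K_L1)
  have Kint: "integrable \<mu> f" if "f \<in> K" for f using subsetD[OF KL1 that] unfolding L1_iff .
  define I where "I = {E. E \<in> sets \<mu> \<and> emeasure \<mu> E < \<infinity>}"
  define A where "A E = {f\<in>K. tail \<mu> f E > \<epsilon>}" for E
  define P where "P = pairing \<mu>"
  have "\<exists>c\<in>K. \<forall>i\<in>I. \<forall>G \<delta>. finite G \<and> G \<subseteq> Linf \<mu> \<and> \<delta> > 0 \<longrightarrow>
           (\<exists>f\<in>A i. \<forall>g\<in>G. \<bar>pairing \<mu> f g - pairing \<mu> c g\<bar> < \<delta>)"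
  proof (rule weak_cluster[OF K])
    show "A i \<subseteq> K" for i unfolding A_def by blast
    fix J assume J: "finite J" "J \<subseteq> I"
    have UJ: "\<Union>J \<in> sets \<mu>" "emeasure \<mu> (\<Union>J) < \<infinity>"
      using finite_union_fin[of J \<mu>] J unfolding I_def by auto
    obtain f where f: "f \<in> K" "tail \<mu> f (\<Union>J) > \<epsilon>" using bad[OF UJ] by blast
    have "f \<in> A j" if "j \<in> J" for j
    proof -
      have "j \<in> sets \<mu>" using J that unfolding I_def by auto
      then have "tail \<mu> f (\<Union>J) \<le> tail \<mu> f j"
        using Kint[OF f(1)] UJ(1) that by (intro tail_mono) auto
      then show ?thesis using f unfolding A_def by simp
    qed
    then show "\<exists>f\<in>K. \<forall>j\<in>J. f \<in> A j" using f(1) by blast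
  qed
  then obtain c where c: "c \<in> K"
    and clu: "\<forall>i\<in>I. \<forall>G \<delta>. finite G \<and> G \<subseteq> Linf \<mu> \<and> \<delta> > 0 \<longrightarrow>
           (\<exists>f\<in>A i. \<forall>g\<in>G. \<bar>pairing \<mu> f g - pairing \<mu> c g\<bar> < \<delta>)"
    by (rule bexE)
  have cl: "\<exists>f\<in>A E. \<forall>g\<in>G. \<bar>P f g - P c g\<bar> < d"
    if "E \<in> I" "finite G" "G \<subseteq> Linf \<mu>" "d > 0" for E G d
  proof -
    have "finite G \<and> G \<subseteq> Linf \<mu> \<and> d > 0" using that by simp
    then show ?thesis using bspec[OF clu that(1)] unfolding P_def by simp
  qed
  define \<delta> where "\<delta> = \<epsilon> / 10"
  have \<delta>: "\<delta> > 0" unfolding \<delta>_def using \<epsilon> by simp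
  define Q where "Q E G t \<longleftrightarrow> fst t \<in> K \<and> fst (snd t) \<in> I \<and> snd (snd t) \<in> I \<and>
      E \<subseteq> fst (snd t) \<and> fst (snd t) \<subseteq> snd (snd t) \<and> tail \<mu> c (fst (snd t)) \<le> \<delta> \<and>
      tail \<mu> (fst t) (fst (snd t)) > \<epsilon> \<and> tail \<mu> (fst t) (snd (snd t)) \<le> \<delta> \<and>
      (\<forall>g\<in>G. \<bar>P (fst t) g - P c g\<bar> < \<delta>)" for E G t
  have unI: "X \<union> Y \<in> I" if "X \<in> I" "Y \<in> I" for X Y
  proof -
    have X: "X \<in> sets \<mu>" "emeasure \<mu> X < \<infinity>" and Y: "Y \<in> sets \<mu>" "emeasure \<mu> Y < \<infinity>"
      using that unfolding I_def by auto
    have "emeasure \<mu> (X \<union> Y) \<le> emeasure \<mu> X + emeasure \<mu> Y" using X(1) Y(1) by (rule emeasure_subadditive)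
    also have "\<dots> < \<infinity>" using X(2) Y(2) by simp
    finally show ?thesis using X(1) Y(1) unfolding I_def by simp
  qed
  have Isets: "X \<in> sets \<mu>" if "X \<in> I" for X using that unfolding I_def by simp
  have step: "\<exists>t. Q E G t" if E: "E \<in> I" and G: "finite G" "G \<subseteq> Linf \<mu>" for E G
  proof -
    obtain Ec where Ec: "Ec \<in> sets \<mu>" "emeasure \<mu> Ec < \<infinity>" "tail \<mu> c Ec \<le> \<delta>"
      using single_tight[OF Kint[OF c] \<delta>] by blast
    define E1 where "E1 = E \<union> Ec"
    have EcI: "Ec \<in> I" using Ec unfolding I_def by simp
    have E1I: "E1 \<in> I" unfolding E1_def by (rule unI[OF E EcI])
    have tc: "tail \<mu> c E1 \<le> \<delta>"
      using tail_mono[OF Kint[OF c] Ec(1) Isets[OF E1I]] Ec(3) unfolding E1_def by auto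
    obtain f where f: "f \<in> A E1" "\<forall>g\<in>G. \<bar>P f g - P c g\<bar> < \<delta>" using cl[OF E1I G \<delta>] by blast
    have fK: "f \<in> K" and tf: "tail \<mu> f E1 > \<epsilon>" using f(1) unfolding A_def by auto
    obtain Ef where Ef: "Ef \<in> sets \<mu>" "emeasure \<mu> Ef < \<infinity>" "tail \<mu> f Ef \<le> \<delta>"
      using single_tight[OF Kint[OF fK] \<delta>] by blast
    define E2 where "E2 = E1 \<union> Ef"
    have EfI: "Ef \<in> I" using Ef unfolding I_def by simp
    have E2I: "E2 \<in> I" unfolding E2_def by (rule unI[OF E1I EfI])
    have tf2: "tail \<mu> f E2 \<le> \<delta>"
      using tail_mono[OF Kint[OF fK] Ef(1) Isets[OF E2I]] Ef(3) unfolding E2_def by auto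
    have "Q E G (f, E1, E2)"
      unfolding Q_def using fK E1I E2I tc tf tf2 f(2) by (auto simp: E1_def E2_def)
    then show ?thesis by blast
  qed
  have "\<forall>EG. \<exists>t. (fst EG \<in> I \<and> finite (snd EG) \<and> snd EG \<subseteq> Linf \<mu>) \<longrightarrow> Q (fst EG) (snd EG) t"
    using step by blast
  from choice[OF this] obtain stp where
    stp0: "\<forall>EG. (fst EG \<in> I \<and> finite (snd EG) \<and> snd EG \<subseteq> Linf \<mu>) \<longrightarrow> Q (fst EG) (snd EG) (stp EG)"
    by (elim exE)
  have stp: "Q E G (stp (E, G))" if "E \<in> I" "finite G" "G \<subseteq> Linf \<mu>" for E G
    using stp0[rule_format, of "(E, G)"] that by simp
  define nxt where "nxt \<sigma> = (let t = stp (fst \<sigma>, snd (snd \<sigma>));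
      S' = (\<lambda>x. fst (snd \<sigma>) x + indicator (snd (snd t) - fst (snd t)) x * sgn (fst t x))
      in (snd (snd t), S', insert S' (snd (snd \<sigma>))))"
    for \<sigma> :: "'a set \<times> ('a \<Rightarrow> real) \<times> ('a \<Rightarrow> real) set"
  define st where "st n = (nxt ^^ n) ({}, (\<lambda>x. 0), {\<lambda>x. 0})" for n
  define Ee where "Ee n = fst (st n)" for n
  define S where "S n = fst (snd (st n))" for n
  define GG where "GG n = snd (snd (st n))" for n
  define tt where "tt n = stp (Ee n, GG n)" for n
  define f where "f n = fst (tt n)" for n
  define E1 where "E1 n = fst (snd (tt n))" for n
  define D where "D n = Ee (Suc n) - E1 n" for n
  have st0: "Ee 0 = {}" "S 0 = (\<lambda>x. 0)" "GG 0 = {\<lambda>x. 0}"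
    by (simp_all add: Ee_def S_def GG_def st_def)
  have stSuc: "st (Suc n) = nxt (st n)" for n by (simp add: st_def)
  have EeS: "Ee (Suc n) = snd (snd (tt n))" for n
    unfolding Ee_def stSuc tt_def nxt_def Let_def GG_def by simp
  have SS: "S (Suc n) = (\<lambda>x. S n x + indicator (D n) x * sgn (f n x))" for n
    unfolding S_def stSuc nxt_def Let_def D_def EeS f_def E1_def
    by (simp add: tt_def Ee_def GG_def)
  have GGS: "GG (Suc n) = insert (S (Suc n)) (GG n)" for n
    unfolding GG_def S_def stSuc nxt_def Let_def by simp
  have inv: "Ee n \<in> I \<and> finite (GG n) \<and> GG n \<subseteq> Linf \<mu> \<and> S n \<in> GG n \<and> S n \<in> borel_measurable \<mu> \<and>
      (\<forall>x. \<bar>S n x\<bar> \<le> 1) \<and> (\<forall>x. x \<notin> Ee n \<longrightarrow> S n x = 0)" for n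
  proof (induct n)
    case 0
    have "{} \<in> I" unfolding I_def by simp
    moreover have "(\<lambda>x. 0::real) \<in> Linf \<mu>" by (rule bdd_Linf[where B=0]) auto
    ultimately show ?case unfolding st0 by simp
  next
    case (Suc n)
    then have IH: "Ee n \<in> I" "finite (GG n)" "GG n \<subseteq> Linf \<mu>" "S n \<in> borel_measurable \<mu>"
        "\<And>x. \<bar>S n x\<bar> \<le> 1" "\<And>x. x \<notin> Ee n \<Longrightarrow> S n x = 0" by auto
    have q: "Q (Ee n) (GG n) (tt n)" unfolding tt_def using IH(1-3) by (rule stp)
    then have fK: "f n \<in> K" and E1I: "E1 n \<in> I" and EsI: "Ee (Suc n) \<in> I"
      and sub1: "Ee n \<subseteq> E1 n" and sub2: "E1 n \<subseteq> Ee (Suc n)"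
      unfolding Q_def f_def E1_def EeS by auto
    have Dm: "D n \<in> sets \<mu>" unfolding D_def using Isets[OF EsI] Isets[OF E1I] by auto
    have fm: "f n \<in> borel_measurable \<mu>" using Kint[OF fK] by (rule borel_measurable_integrable)
    have Sm: "S (Suc n) \<in> borel_measurable \<mu>"
      unfolding SS using IH(4) Dm fm by measurable
    have Sb: "\<bar>S (Suc n) x\<bar> \<le> 1" for x
    proof (cases "x \<in> D n")
      case True
      then have "x \<notin> Ee n" using sub1 unfolding D_def by auto
      then have "S n x = 0" by (rule IH(6))
      then show ?thesis unfolding SS using True by (simp add: sgn_if)
    next
      case False
      then show ?thesis unfolding SS using IH(5)[of x] by simp
    qed
    have S0: "S (Suc n) x = 0" if "x \<notin> Ee (Suc n)" for x
    proof -
      have "x \<notin> D n" "x \<notin> Ee n" using that sub1 sub2 unfolding D_def by auto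
      then show ?thesis unfolding SS using IH(6) by simp
    qed
    have SL: "S (Suc n) \<in> Linf \<mu>" using Sm Sb by (rule bdd_Linf)
    show ?case unfolding GGS using EsI IH(2,3) SL Sm Sb S0 by simp
  qed
  have qn: "Q (Ee n) (GG n) (tt n)" for n
    unfolding tt_def using inv[of n] by (intro stp) auto
  have fK: "f n \<in> K" and E1I: "E1 n \<in> I" and EsI: "Ee (Suc n) \<in> I"
      and sub1: "Ee n \<subseteq> E1 n" and sub2: "E1 n \<subseteq> Ee (Suc n)"
      and tc: "tail \<mu> c (E1 n) \<le> \<delta>" and tf1: "tail \<mu> (f n) (E1 n) > \<epsilon>"
      and tf2: "tail \<mu> (f n) (Ee (Suc n)) \<le> \<delta>"
      and close: "\<And>g. g \<in> GG n \<Longrightarrow> \<bar>P (f n) g - P c g\<bar> < \<delta>" for n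
    using qn[of n] unfolding Q_def f_def E1_def EeS by auto
  have EeI: "Ee n \<in> I" for n using inv[of n] by simp
  have Sm[measurable]: "S n \<in> borel_measurable \<mu>" for n using inv[of n] by simp
  have Sb: "\<bar>S n x\<bar> \<le> 1" for n x using inv[of n] by simp
  have S0: "x \<notin> Ee n \<Longrightarrow> S n x = 0" for n x using inv[of n] by simp
  have SG: "S n \<in> GG n" for n using inv[of n] by simp
  have GL: "GG n \<subseteq> Linf \<mu>" for n using inv[of n] by simp
  have Eemono: "Ee n \<subseteq> Ee m" if "n \<le> m" for n m
    using lift_Suc_mono_le[of Ee, OF _ that] sub1 sub2 by blast
  have GGmono: "GG n \<subseteq> GG m" if "n \<le> m" for n m
    using lift_Suc_mono_le[of GG, OF _ that] GGS by blast
  have Dm: "D n \<in> sets \<mu>" for n unfolding D_def using Isets[OF EsI] Isets[OF E1I] by auto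
  have fm[measurable]: "f n \<in> borel_measurable \<mu>" for n using Kint[OF fK] by (rule borel_measurable_integrable)
  have Sstab: "S n x = S m x" if "x \<in> Ee m" "m \<le> n" for x m n
    using that(2)
  proof (induct n rule: dec_induct)
    case base
    then show ?case by simp
  next
    case (step k)
    have "x \<in> Ee k" using Eemono[OF step(1)] that(1) by blast
    then have "x \<notin> D k" using sub1[of k] unfolding D_def by blast
    then show ?case unfolding SS using step(3) by simp
  qed
  define s where "s x = (if \<exists>m. x \<in> Ee m then S (LEAST m. x \<in> Ee m) x else 0)" for x
  have s_eq: "s x = S n x" if "x \<in> Ee n" for x n
  proof -
    define m where "m = (LEAST m. x \<in> Ee m)"
    have m: "x \<in> Ee m" "m \<le> n" unfolding m_def using that by (auto intro: LeastI Least_le)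
    have "s x = S m x" unfolding s_def m_def using that by auto
    also have "\<dots> = S n x" using Sstab[OF m(1) m(2)] by simp
    finally show ?thesis .
  qed
  have s_out: "s x = 0" if "\<forall>m. x \<notin> Ee m" for x unfolding s_def using that by auto
  have S_lim: "(\<lambda>n. S n x) \<longlonglongrightarrow> s x" for x
  proof (cases "\<exists>m. x \<in> Ee m")
    case True
    then obtain m where m: "x \<in> Ee m" by blast
    have "\<forall>n\<ge>m. S n x = s x"
    proof (intro allI impI)
      fix n assume "n \<ge> m"
      then have "x \<in> Ee n" using Eemono[of m n] m by blast
      then show "S n x = s x" by (simp add: s_eq)
    qed
    then have "eventually (\<lambda>n. S n x = s x) sequentially" unfolding eventually_sequentially by blast
    then show ?thesis by (rule tendsto_eventually)
  next
    case False
    then have "S n x = s x" for n using S0 s_out by auto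
    then show ?thesis by simp
  qed
  have sm[measurable]: "s \<in> borel_measurable \<mu>"
    by (rule borel_measurable_LIMSEQ_real[OF S_lim Sm])
  have sb: "\<bar>s x\<bar> \<le> 1" for x
    by (cases "\<exists>m. x \<in> Ee m") (auto simp: s_def Sb)
  have sL: "s \<in> Linf \<mu>" using sm sb by (rule bdd_Linf)
  have s_E1: "s x = 0" if "x \<in> E1 n" "x \<notin> Ee n" for x n
  proof -
    have "x \<in> Ee (Suc n)" "x \<notin> D n" using that sub2 unfolding D_def by auto
    then show ?thesis using s_eq[of x "Suc n"] S0[OF that(2)] unfolding SS by simp
  qed
  have s_D: "s x = sgn (f n x)" if "x \<in> D n" for x n
  proof -
    have "x \<in> Ee (Suc n)" "x \<notin> Ee n" using that sub1 unfolding D_def by auto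
    then show ?thesis using s_eq[of x "Suc n"] S0[of x n] that unfolding SS by simp
  qed
  have I0: "s x = S n x + (1 - indicator (Ee n) x) * s x" for x n
    by (cases "x \<in> Ee n") (auto simp: s_eq S0)
  have I1: "s x = S n x + (1 - indicator (E1 n) x) * s x" for x n
  proof (cases "x \<in> E1 n")
    case True
    then show ?thesis by (cases "x \<in> Ee n") (auto simp: s_eq S0 s_E1)
  next
    case False
    then have "x \<notin> Ee n" using sub1 by auto
    then show ?thesis using False by (simp add: S0)
  qed
  have I2: "(1 - indicator (E1 n) x) * s x = indicator (D n) x * sgn (f n x) + (1 - indicator (Ee (Suc n)) x) * s x"
    for x n
  proof (cases "x \<in> D n")
    case True
    then show ?thesis using s_D[OF True] unfolding D_def by simp
  next
    case False
    then show ?thesis using sub2[of n] unfolding D_def by (auto simp: indicator_def)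
  qed
  have I3: "(1 - indicator (E1 n) x) * \<bar>f n x\<bar> = indicator (D n) x * \<bar>f n x\<bar> + (1 - indicator (Ee (Suc n)) x) * \<bar>f n x\<bar>"
    for x n
    using sub2[of n] unfolding D_def by (auto simp: indicator_def)
  have I4: "u x * (indicator B x * sgn (u x)) = indicator B x * \<bar>u x\<bar>" for u :: "'a \<Rightarrow> real" and B x
    by (auto simp: indicator_def sgn_if)
  have cutL: "(\<lambda>x. (1 - indicator B x) * s x) \<in> Linf \<mu>" if "B \<in> sets \<mu>" for B
  proof (rule bdd_Linf[where B=1])
    show "(\<lambda>x. (1 - indicator B x) * s x) \<in> borel_measurable \<mu>" using that by measurable
    show "\<bar>(1 - indicator B x) * s x\<bar> \<le> 1" for x using sb[of x] by (auto simp: indicator_def)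
  qed
  have hL: "(\<lambda>x. indicator (D n) x * sgn (f n x)) \<in> Linf \<mu>" for n
  proof (rule bdd_Linf[where B=1])
    show "(\<lambda>x. indicator (D n) x * sgn (f n x)) \<in> borel_measurable \<mu>" using Dm[of n] by measurable
    show "\<bar>indicator (D n) x * sgn (f n x)\<bar> \<le> 1" for x by (auto simp: indicator_def sgn_if)
  qed
  have SL: "S n \<in> Linf \<mu>" for n using SG GL by blast
  have cL1: "c \<in> L1 \<mu>" and fL1: "f n \<in> L1 \<mu>" for n using KL1 c fK by auto
  have dec0: "P h s = P h (S n) + P h (\<lambda>x. (1 - indicator (Ee n) x) * s x)" if "h \<in> L1 \<mu>" for h n
    unfolding P_def using that SL cutL[OF Isets[OF EeI]] I0 by (rule pairing_split)
  have dec1: "P h s = P h (S n) + P h (\<lambda>x. (1 - indicator (E1 n) x) * s x)" if "h \<in> L1 \<mu>" for h n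
    unfolding P_def using that SL cutL[OF Isets[OF E1I]] I1 by (rule pairing_split)
  have dec2: "P h (\<lambda>x. (1 - indicator (E1 n) x) * s x) =
      P h (\<lambda>x. indicator (D n) x * sgn (f n x)) + P h (\<lambda>x. (1 - indicator (Ee (Suc n)) x) * s x)"
    if "h \<in> L1 \<mu>" for h n
    unfolding P_def using that hL cutL[OF Isets[OF EsI]] I2 by (rule pairing_split)
  have Dpart: "P (f n) (\<lambda>x. indicator (D n) x * sgn (f n x)) = tail \<mu> (f n) (E1 n) - tail \<mu> (f n) (Ee (Suc n))"
    for n
  proof -
    have fi: "integrable \<mu> (f n)" by (rule Kint[OF fK])
    have "P (f n) (\<lambda>x. indicator (D n) x * sgn (f n x)) = (LINT x|\<mu>. indicator (D n) x * \<bar>f n x\<bar>)"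
      unfolding P_def pairing_def by (simp only: I4)
    moreover have "tail \<mu> (f n) (E1 n) = (LINT x|\<mu>. indicator (D n) x * \<bar>f n x\<bar>) + tail \<mu> (f n) (Ee (Suc n))"
    proof -
      have i1: "integrable \<mu> (\<lambda>x. indicator (D n) x * \<bar>f n x\<bar>)"
        using integrable_real_mult_indicator[OF Dm integrable_abs[OF fi]] by (simp add: mult.commute)
      have i2: "integrable \<mu> (\<lambda>x. (1 - indicator (Ee (Suc n)) x) * \<bar>f n x\<bar>)"
        using fi Isets[OF EsI] by (rule tail_integrable)
      have "tail \<mu> (f n) (E1 n) = (LINT x|\<mu>. indicator (D n) x * \<bar>f n x\<bar> + (1 - indicator (Ee (Suc n)) x) * \<bar>f n x\<bar>)"
        unfolding tail_def by (simp only: I3)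
      also have "\<dots> = (LINT x|\<mu>. indicator (D n) x * \<bar>f n x\<bar>) + tail \<mu> (f n) (Ee (Suc n))"
        unfolding tail_def using i1 i2 by (rule Bochner_Integration.integral_add)
      finally show ?thesis .
    qed
    ultimately show ?thesis by simp
  qed
  have ineq: "P (f n) s - P c s \<ge> \<epsilon> - 4 * \<delta>" for n
  proof -
    have a: "P (f n) s = P (f n) (S n) + (tail \<mu> (f n) (E1 n) - tail \<mu> (f n) (Ee (Suc n)))
        + P (f n) (\<lambda>x. (1 - indicator (Ee (Suc n)) x) * s x)"
      using dec1[OF fL1[of n], of n] dec2[OF fL1[of n], of n] Dpart[of n] by simp
    have b: "P c s = P c (S n) + P c (\<lambda>x. (1 - indicator (E1 n) x) * s x)"
      using dec1[OF cL1] by simp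
    have t1: "\<bar>P (f n) (\<lambda>x. (1 - indicator (Ee (Suc n)) x) * s x)\<bar> \<le> tail \<mu> (f n) (Ee (Suc n))"
      unfolding P_def using Kint[OF fK] Isets[OF EsI] sm sb by (rule pairing_tail_bound)
    have t2: "\<bar>P c (\<lambda>x. (1 - indicator (E1 n) x) * s x)\<bar> \<le> tail \<mu> c (E1 n)"
      unfolding P_def using Kint[OF c] Isets[OF E1I] sm sb by (rule pairing_tail_bound)
    have t3: "\<bar>P (f n) (S n) - P c (S n)\<bar> < \<delta>" using close[OF SG] .
    show ?thesis using a b t1 t2 t3 tc[of n] tf1[of n] tf2[of n] by linarith
  qed
  have "\<exists>c'\<in>K. \<forall>i\<in>(UNIV::nat set). \<forall>G d. finite G \<and> G \<subseteq> Linf \<mu> \<and> d > 0 \<longrightarrow>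
           (\<exists>g'\<in>f ` {i..}. \<forall>g\<in>G. \<bar>pairing \<mu> g' g - pairing \<mu> c' g\<bar> < d)"
  proof (rule weak_cluster[OF K])
    show "f ` {i..} \<subseteq> K" for i using fK by blast
    fix J :: "nat set" assume J: "finite J" "J \<subseteq> UNIV"
    define m where "m = Max (insert 0 J)"
    have mj: "j \<le> m" if "j \<in> J" for j using J(1) that unfolding m_def by simp
    show "\<exists>g'\<in>K. \<forall>j\<in>J. g' \<in> f ` {j..}"
    proof (intro bexI[of _ "f m"] ballI)
      show "f m \<in> K" by (rule fK)
      fix j assume "j \<in> J"
      then show "f m \<in> f ` {j..}" using mj by auto
    qed
  qed
  then obtain c' where c': "c' \<in> K" and clu2: "\<forall>i\<in>(UNIV::nat set). \<forall>G d. finite G \<and> G \<subseteq> Linf \<mu> \<and> d > 0 \<longrightarrow>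
           (\<exists>g'\<in>f ` {i..}. \<forall>g\<in>G. \<bar>pairing \<mu> g' g - pairing \<mu> c' g\<bar> < d)"
    by (rule bexE)
  have cl2: "\<exists>j\<ge>i. \<forall>g\<in>G. \<bar>P (f j) g - P c' g\<bar> < d" if "finite G" "G \<subseteq> Linf \<mu>" "d > 0" for i G d
  proof -
    have "finite G \<and> G \<subseteq> Linf \<mu> \<and> d > 0" using that by simp
    then have "\<exists>g'\<in>f ` {i..}. \<forall>g\<in>G. \<bar>pairing \<mu> g' g - pairing \<mu> c' g\<bar> < d"
      using clu2 by simp
    then obtain g' where g': "g' \<in> f ` {i..}" "\<forall>g\<in>G. \<bar>pairing \<mu> g' g - pairing \<mu> c' g\<bar> < d"
      by (rule bexE)
    then obtain j where "j \<ge> i" "g' = f j" by auto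
    then show ?thesis using g'(2) unfolding P_def by blast
  qed
  have cutlim: "(\<lambda>n. P h (\<lambda>x. (1 - indicator (Ee n) x) * s x)) \<longlonglongrightarrow> 0" if h: "h \<in> L1 \<mu>" for h
  proof -
    have hi: "integrable \<mu> h" using h unfolding L1_iff .
    have hm[measurable]: "h \<in> borel_measurable \<mu>" using hi by (rule borel_measurable_integrable)
    have "(\<lambda>n. LINT x|\<mu>. h x * ((1 - indicator (Ee n) x) * s x)) \<longlonglongrightarrow> (LINT x|\<mu>. 0)"
    proof (rule integral_dominated_convergence[where w="\<lambda>x. \<bar>h x\<bar>"])
      show "(\<lambda>x. 0::real) \<in> borel_measurable \<mu>" by simp
      show "(\<lambda>x. h x * ((1 - indicator (Ee n) x) * s x)) \<in> borel_measurable \<mu>" for n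
        using Isets[OF EeI[of n]] by measurable
      show "integrable \<mu> (\<lambda>x. \<bar>h x\<bar>)" using hi by simp
      show "AE x in \<mu>. norm (h x * ((1 - indicator (Ee n) x) * s x)) \<le> \<bar>h x\<bar>" for n
      proof (rule AE_I2)
        fix x
        have "\<bar>(1 - indicator (Ee n) x) * s x\<bar> \<le> 1" using sb[of x] by (auto simp: indicator_def)
        then have "\<bar>h x\<bar> * \<bar>(1 - indicator (Ee n) x) * s x\<bar> \<le> \<bar>h x\<bar> * 1"
          by (intro mult_left_mono) auto
        then show "norm (h x * ((1 - indicator (Ee n) x) * s x)) \<le> \<bar>h x\<bar>"
          by (simp add: abs_mult)
      qed
      show "AE x in \<mu>. (\<lambda>n. h x * ((1 - indicator (Ee n) x) * s x)) \<longlonglongrightarrow> 0"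
      proof (rule AE_I2)
        fix x
        show "(\<lambda>n. h x * ((1 - indicator (Ee n) x) * s x)) \<longlonglongrightarrow> 0"
        proof (cases "\<exists>m. x \<in> Ee m")
          case True
          then obtain m where m: "x \<in> Ee m" by blast
          have "\<forall>n\<ge>m. h x * ((1 - indicator (Ee n) x) * s x) = 0"
          proof (intro allI impI)
            fix n assume "n \<ge> m"
            then have "x \<in> Ee n" using Eemono[of m n] m by blast
            then show "h x * ((1 - indicator (Ee n) x) * s x) = 0" by simp
          qed
          then have "eventually (\<lambda>n. h x * ((1 - indicator (Ee n) x) * s x) = 0) sequentially"
            unfolding eventually_sequentially by blast
          then show ?thesis by (rule tendsto_eventually)
        next
          case False
          then have "s x = 0" by (intro s_out) blast
          then show ?thesis by simp
        qed
      qed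
    qed
    then show ?thesis unfolding P_def pairing_def by simp
  qed
  have e20: "\<epsilon> / 20 > 0" using \<epsilon> by simp
  have ev1: "eventually (\<lambda>n. \<bar>P c' (\<lambda>x. (1 - indicator (Ee n) x) * s x)\<bar> < \<epsilon> / 20) sequentially"
    using tendsto_rabs_zero[OF cutlim[OF subsetD[OF KL1 c']]] e20 by (rule order_tendstoD(2))
  have ev2: "eventually (\<lambda>n. \<bar>P c (\<lambda>x. (1 - indicator (Ee n) x) * s x)\<bar> < \<epsilon> / 20) sequentially"
    using tendsto_rabs_zero[OF cutlim[OF cL1]] e20 by (rule order_tendstoD(2))
  obtain n where n1: "\<bar>P c' (\<lambda>x. (1 - indicator (Ee n) x) * s x)\<bar> < \<epsilon> / 20"
    and n2: "\<bar>P c (\<lambda>x. (1 - indicator (Ee n) x) * s x)\<bar> < \<epsilon> / 20"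
    using eventually_conj[OF ev1 ev2] unfolding eventually_sequentially by blast
  have Gfin: "finite {s, S n}" and GsubL: "{s, S n} \<subseteq> Linf \<mu>" using sL SL by auto
  obtain j where j: "j \<ge> Suc n" "\<forall>g\<in>{s, S n}. \<bar>P (f j) g - P c' g\<bar> < \<epsilon> / 20"
    using cl2[OF Gfin GsubL e20] by blast
  have j1: "\<bar>P (f j) s - P c' s\<bar> < \<epsilon> / 20" and j2: "\<bar>P (f j) (S n) - P c' (S n)\<bar> < \<epsilon> / 20"
    using j(2) by auto
  have "S n \<in> GG j" using GGmono[of n j] SG[of n] j(1) by auto
  then have j3: "\<bar>P (f j) (S n) - P c (S n)\<bar> < \<delta>" by (rule close)
  have j4: "P (f j) s - P c s \<ge> \<epsilon> - 4 * \<delta>" by (rule ineq)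
  have d1: "P c' s = P c' (S n) + P c' (\<lambda>x. (1 - indicator (Ee n) x) * s x)"
    using dec0[OF subsetD[OF KL1 c']] by simp
  have d2: "P c s = P c (S n) + P c (\<lambda>x. (1 - indicator (Ee n) x) * s x)"
    using dec0[OF cL1] by simp
  show False using j1 j2 j3 j4 d1 d2 n1 n2 \<epsilon> unfolding \<delta>_def by linarith
qed

lemma dual_split:
  assumes "\<phi> \<in> L1_dual \<mu>" "u \<in> L1 \<mu>" "v \<in> L1 \<mu>" "\<And>x. w x = u x + v x"
  shows "\<phi> w = \<phi> u + \<phi> v"
proof -
  have "w = (\<lambda>x. u x + v x)" by (rule ext) (rule assms(4))
  then show ?thesis using dual_add[OF assms(1-3)] by simp
qed

lemma approx_dual:
  assumes K: "compactin (weak_topology (L1 \<mu>) (Linf \<mu>) (pairing \<mu>)) K"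
    and \<phi>: "\<phi> \<in> L1_dual \<mu>" and e: "e > 0"
  shows "\<exists>g\<in>Linf \<mu>. \<forall>f\<in>K. \<bar>\<phi> f - pairing \<mu> f g\<bar> \<le> e"
proof -
  obtain C where C: "C \<ge> 0" "\<And>f. f \<in> L1 \<mu> \<Longrightarrow> \<bar>\<phi> f\<bar> \<le> C * (LINT x|\<mu>. \<bar>f x\<bar>)"
    using dual_bound[OF \<phi>] by blast
  have e': "e / (C + 1) > 0" using e C(1) by simp
  obtain E where E: "E \<in> sets \<mu>" "emeasure \<mu> E < \<infinity>" "\<forall>f\<in>K. tail \<mu> f E \<le> e / (C + 1)"
    using tightness[OF K e'] by blast
  obtain g where g: "g \<in> Linf \<mu>" "\<forall>f\<in>L1 \<mu>. \<phi> (\<lambda>x. indicator E x * f x) = pairing \<mu> f g"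
    using rep_finite[OF \<phi> E(1,2)] by blast
  have KL1: "K \<subseteq> L1 \<mu>" using K by (rule K_L1)
  have "\<bar>\<phi> f - pairing \<mu> f g\<bar> \<le> e" if f: "f \<in> K" for f
  proof -
    have fL: "f \<in> L1 \<mu>" using KL1 f by blast
    have fi: "integrable \<mu> f" using fL unfolding L1_iff .
    have u: "(\<lambda>x. indicator E x * f x) \<in> L1 \<mu>"
      using integrable_real_mult_indicator[OF E(1) fi] unfolding L1_iff by (simp add: mult.commute)
    have v: "(\<lambda>x. (1 - indicator E x) * f x) \<in> L1 \<mu>"
    proof -
      have "integrable \<mu> (\<lambda>x. f x - indicator E x * f x)"
        using fi u unfolding L1_iff by (rule Bochner_Integration.integrable_diff)
      then show ?thesis unfolding L1_iff by (simp add: algebra_simps)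
    qed
    have split: "\<phi> f = \<phi> (\<lambda>x. indicator E x * f x) + \<phi> (\<lambda>x. (1 - indicator E x) * f x)"
      using \<phi> u v by (rule dual_split) (simp add: algebra_simps)
    have "\<bar>\<phi> (\<lambda>x. (1 - indicator E x) * f x)\<bar> \<le> C * (LINT x|\<mu>. \<bar>(1 - indicator E x) * f x\<bar>)"
      using C(2)[OF v] .
    also have "(LINT x|\<mu>. \<bar>(1 - indicator E x) * f x\<bar>) = tail \<mu> f E"
      unfolding tail_def by (rule Bochner_Integration.integral_cong) (auto simp: indicator_def)
    finally have "\<bar>\<phi> (\<lambda>x. (1 - indicator E x) * f x)\<bar> \<le> C * tail \<mu> f E" .
    also have "\<dots> \<le> C * (e / (C + 1))" using E(3) f C(1) by (intro mult_left_mono) auto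
    also have "\<dots> \<le> e"
    proof -
      have "C * (e / (C + 1)) = e * (C / (C + 1))" by simp
      also have "\<dots> \<le> e * 1" using C(1) e by (intro mult_left_mono) auto
      finally show ?thesis by simp
    qed
    finally have "\<bar>\<phi> (\<lambda>x. (1 - indicator E x) * f x)\<bar> \<le> e" .
    then show ?thesis using split g(2) fL by simp
  qed
  then show ?thesis using g(1) by blast
qed

definition iota :: "'a measure \<Rightarrow> ('a \<Rightarrow> real) \<Rightarrow> ('a \<Rightarrow> real) \<Rightarrow> real" where
  "iota \<mu> g = (\<lambda>f. pairing \<mu> f g)"

lemma iota_dual:
  assumes g: "g \<in> Linf \<mu>"
  shows "iota \<mu> g \<in> L1_dual \<mu>"
proof -
  obtain C where C: "g \<in> borel_measurable \<mu>" "AE x in \<mu>. \<bar>g x\<bar> \<le> C" "C \<ge> 0"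
    using LinfE[OF g] by blast
  have lin: "iota \<mu> g (\<lambda>x. a * f x + b * h x) = a * iota \<mu> g f + b * iota \<mu> g h"
    if "f \<in> L1 \<mu>" "h \<in> L1 \<mu>" for f h and a b :: real
  proof -
    have i: "integrable \<mu> (\<lambda>x. f x * g x)" "integrable \<mu> (\<lambda>x. h x * g x)"
      using pairing_integrable[OF that(1) g] pairing_integrable[OF that(2) g] by auto
    have "(LINT x|\<mu>. (a * f x + b * h x) * g x) = (LINT x|\<mu>. a * (f x * g x) + b * (h x * g x))"
      by (simp add: algebra_simps)
    also have "\<dots> = (LINT x|\<mu>. a * (f x * g x)) + (LINT x|\<mu>. b * (h x * g x))"
      using i by (intro Bochner_Integration.integral_add) auto
    also have "\<dots> = a * (LINT x|\<mu>. f x * g x) + b * (LINT x|\<mu>. h x * g x)" by simp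
    finally show ?thesis unfolding iota_def pairing_def .
  qed
  have bnd: "\<bar>iota \<mu> g f\<bar> \<le> C * (LINT x|\<mu>. \<bar>f x\<bar>)" if "f \<in> L1 \<mu>" for f
  proof -
    have fi: "integrable \<mu> f" using that unfolding L1_iff .
    have "\<bar>LINT x|\<mu>. f x * g x\<bar> \<le> (LINT x|\<mu>. \<bar>f x * g x\<bar>)" by (rule integral_abs_bound)
    also have "\<dots> \<le> (LINT x|\<mu>. C * \<bar>f x\<bar>)"
    proof (rule integral_mono_AE)
      show "integrable \<mu> (\<lambda>x. \<bar>f x * g x\<bar>)" using pairing_integrable[OF that g] by simp
      show "integrable \<mu> (\<lambda>x. C * \<bar>f x\<bar>)" using fi by simp
      show "AE x in \<mu>. \<bar>f x * g x\<bar> \<le> C * \<bar>f x\<bar>"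
        using C(2)
      proof eventually_elim
        fix x assume "\<bar>g x\<bar> \<le> C"
        then have "\<bar>f x\<bar> * \<bar>g x\<bar> \<le> \<bar>f x\<bar> * C" by (intro mult_left_mono) auto
        then show "\<bar>f x * g x\<bar> \<le> C * \<bar>f x\<bar>" by (simp add: abs_mult mult.commute)
      qed
    qed
    also have "\<dots> = C * (LINT x|\<mu>. \<bar>f x\<bar>)" by simp
    finally show ?thesis unfolding iota_def pairing_def .
  qed
  show ?thesis unfolding L1_dual_def using lin bnd by blast
qed

lemma compact_M_imp_inf:
  assumes K: "compactin (weak_topology (L1 \<mu>) (L1_dual \<mu>) (\<lambda>f \<phi>. \<phi> f)) K"
  shows "compactin (weak_topology (L1 \<mu>) (Linf \<mu>) (pairing \<mu>)) K"
proof (rule compactin_transfer[OF K])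
  show "topspace (weak_topology (L1 \<mu>) (Linf \<mu>) (pairing \<mu>)) =
        topspace (weak_topology (L1 \<mu>) (L1_dual \<mu>) (\<lambda>f \<phi>. \<phi> f))"
    by (simp add: topspace_weak)
  fix U x
  assume U: "openin (weak_topology (L1 \<mu>) (Linf \<mu>) (pairing \<mu>)) U" and x: "x \<in> K" "x \<in> U"
  obtain G e where G: "finite G" "G \<subseteq> Linf \<mu>" "e > 0"
    "{y\<in>L1 \<mu>. \<forall>g\<in>G. \<bar>pairing \<mu> y g - pairing \<mu> x g\<bar> \<le> e} \<subseteq> U"
    by (rule openin_weakD[OF U x(2)])
  define V where "V = {y\<in>L1 \<mu>. \<forall>\<phi>\<in>iota \<mu> ` G. \<bar>\<phi> y - \<phi> x\<bar> < e}"
  have xL: "x \<in> L1 \<mu>" using K_L1[OF K] x(1) by blast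
  have "openin (weak_topology (L1 \<mu>) (L1_dual \<mu>) (\<lambda>f \<phi>. \<phi> f)) V"
    unfolding V_def using G(1-3) iota_dual by (intro openin_weak_basic) auto
  moreover have "x \<in> V" unfolding V_def using xL G(3) by simp
  moreover have "K \<inter> V \<subseteq> U"
  proof
    fix y assume y: "y \<in> K \<inter> V"
    then have "y \<in> L1 \<mu>" "\<forall>g\<in>G. \<bar>pairing \<mu> y g - pairing \<mu> x g\<bar> < e"
      unfolding V_def iota_def by auto
    then have "y \<in> {y\<in>L1 \<mu>. \<forall>g\<in>G. \<bar>pairing \<mu> y g - pairing \<mu> x g\<bar> \<le> e}" by force
    then show "y \<in> U" using G(4) by blast
  qed
  ultimately show "\<exists>V. openin (weak_topology (L1 \<mu>) (L1_dual \<mu>) (\<lambda>f \<phi>. \<phi> f)) V \<and> x \<in> V \<and> K \<inter> V \<subseteq> U"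
    by blast
qed

lemma compact_inf_imp_M:
  assumes K: "compactin (weak_topology (L1 \<mu>) (Linf \<mu>) (pairing \<mu>)) K"
  shows "compactin (weak_topology (L1 \<mu>) (L1_dual \<mu>) (\<lambda>f \<phi>. \<phi> f)) K"
proof (rule compactin_transfer[OF K])
  show "topspace (weak_topology (L1 \<mu>) (L1_dual \<mu>) (\<lambda>f \<phi>. \<phi> f)) =
        topspace (weak_topology (L1 \<mu>) (Linf \<mu>) (pairing \<mu>))"
    by (simp add: topspace_weak)
  fix U x
  assume U: "openin (weak_topology (L1 \<mu>) (L1_dual \<mu>) (\<lambda>f \<phi>. \<phi> f)) U" and x: "x \<in> K" "x \<in> U"
  obtain \<Phi> e where \<Phi>: "finite \<Phi>" "\<Phi> \<subseteq> L1_dual \<mu>" "e > 0"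
    "{y\<in>L1 \<mu>. \<forall>\<phi>\<in>\<Phi>. \<bar>\<phi> y - \<phi> x\<bar> \<le> e} \<subseteq> U"
    by (rule openin_weakD[OF U x(2)])
  have e3: "e / 3 > 0" using \<Phi>(3) by simp
  have "\<forall>\<phi>\<in>\<Phi>. \<exists>g. g \<in> Linf \<mu> \<and> (\<forall>f\<in>K. \<bar>\<phi> f - pairing \<mu> f g\<bar> \<le> e / 3)"
  proof
    fix \<phi> assume "\<phi> \<in> \<Phi>"
    then have "\<phi> \<in> L1_dual \<mu>" using \<Phi>(2) by blast
    from approx_dual[OF K this e3] show "\<exists>g. g \<in> Linf \<mu> \<and> (\<forall>f\<in>K. \<bar>\<phi> f - pairing \<mu> f g\<bar> \<le> e / 3)"
      by blast
  qed
  from bchoice[OF this] obtain gf where gf: "\<forall>\<phi>\<in>\<Phi>. gf \<phi> \<in> Linf \<mu> \<and> (\<forall>f\<in>K. \<bar>\<phi> f - pairing \<mu> f (gf \<phi>)\<bar> \<le> e / 3)"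
    by (elim exE)
  define V where "V = {y\<in>L1 \<mu>. \<forall>g\<in>gf ` \<Phi>. \<bar>pairing \<mu> y g - pairing \<mu> x g\<bar> < e / 3}"
  have xL: "x \<in> L1 \<mu>" using K_L1[OF K] x(1) by blast
  have "openin (weak_topology (L1 \<mu>) (Linf \<mu>) (pairing \<mu>)) V"
    unfolding V_def using \<Phi>(1) gf e3 by (intro openin_weak_basic) auto
  moreover have "x \<in> V" unfolding V_def using xL e3 by simp
  moreover have "K \<inter> V \<subseteq> U"
  proof
    fix y assume y: "y \<in> K \<inter> V"
    have yL: "y \<in> L1 \<mu>" using y unfolding V_def by blast
    have "\<bar>\<phi> y - \<phi> x\<bar> \<le> e" if "\<phi> \<in> \<Phi>" for \<phi>
    proof -
      have a: "\<bar>\<phi> y - pairing \<mu> y (gf \<phi>)\<bar> \<le> e / 3" using gf that y by blast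
      have b: "\<bar>\<phi> x - pairing \<mu> x (gf \<phi>)\<bar> \<le> e / 3" using gf that x(1) by blast
      have c: "\<bar>pairing \<mu> y (gf \<phi>) - pairing \<mu> x (gf \<phi>)\<bar> < e / 3" using y that unfolding V_def by blast
      show ?thesis using a b c by linarith
    qed
    then have "y \<in> {y\<in>L1 \<mu>. \<forall>\<phi>\<in>\<Phi>. \<bar>\<phi> y - \<phi> x\<bar> \<le> e}" using yL by blast
    then show "y \<in> U" using \<Phi>(4) by blast
  qed
  ultimately show "\<exists>V. openin (weak_topology (L1 \<mu>) (Linf \<mu>) (pairing \<mu>)) V \<and> x \<in> V \<and> K \<inter> V \<subseteq> U"
    by blast
qed

theorem mainTheorem6:
  fixes \<mu> :: "'a measure"
  assumes "semifinite_measure \<mu>"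
  shows "mackey_topology (Linf \<mu>) (L1 \<mu>) (pairing \<mu>) =
         pullback_topology (Linf \<mu>) (\<lambda>g f. pairing \<mu> f g)
           (mackey_topology (L1_dual \<mu>) (L1 \<mu>) (\<lambda>f \<phi>. \<phi> f))"
proof -
  have fam: "{K. K \<subseteq> L1 \<mu> \<and> abs_convex K \<and> compactin (weak_topology (L1 \<mu>) (Linf \<mu>) (pairing \<mu>)) K} =
             {K. K \<subseteq> L1 \<mu> \<and> abs_convex K \<and> compactin (weak_topology (L1 \<mu>) (L1_dual \<mu>) (\<lambda>f \<phi>. \<phi> f)) K}"
    using compact_M_imp_inf compact_inf_imp_M by blast
  have "pullback_topology (Linf \<mu>) (\<lambda>g f. pairing \<mu> f g)
           (mackey_topology (L1_dual \<mu>) (L1 \<mu>) (\<lambda>f \<phi>. \<phi> f)) =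
        unif_conv_topology (Linf \<mu>)
          {K. K \<subseteq> L1 \<mu> \<and> abs_convex K \<and> compactin (weak_topology (L1 \<mu>) (L1_dual \<mu>) (\<lambda>f \<phi>. \<phi> f)) K}
          (pairing \<mu>)"
    unfolding mackey_topology_def
  proof (rule pullback_uc)
    show "(\<lambda>f. pairing \<mu> f g) \<in> L1_dual \<mu>" if "g \<in> Linf \<mu>" for g
      using iota_dual[OF that] unfolding iota_def .
    show "pairing \<mu> w g = pairing \<mu> w g" for w g by (rule refl)
  qed
  then show ?thesis unfolding mackey_topology_def fam by simp
qed

end
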